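(* Let $H$ be a finite-dimensional semisimple Hopf algebra over an algebraically closed field $k$ of characteristic $0$. The following are equivalent: (i) there exists a $1$-dimensional representation of $H$ whose character is faithful; (ii) $R(H)=k\langle\sigma\rangle$, the span of the powers of some grouplike element $\sigma$ of $H^*$; (iii) $H\cong(k\langle\sigma\rangle)^*$, i.e. $H^*$ is the group algebra of the cyclic group generated by some grouplike element $\sigma$ of $H^*$.
   Context: A character $\chi_V$ of a finite-dimensional left $H$-module $V$ is faithful if $\mathrm{LKer}_V=k1$, where $\mathrm{LKer}_V=\{h\in H\mid\sum h_1\otimes h_2\cdot v=h\otimes v\ \forall v\in V\}$. $R(H)\subset H^*$ is the span of the irreducible characters of $H$. *)

theory Defs
  imports "HOL-Computational_Algebra.Polynomial"
begin

text \<open>A finite-dimensional Hopf algebra H over a field 'k is encoded by its dimension n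
and its structure constants with respect to a basis e_0,...,e_(n-1):
  e_i e_j = sum_l hmu i j l e_l,   1 = sum_l heta l e_l,
  Delta e_i = sum_(j,l) hdelta i j l (e_j (x) e_l),   eps e_i = heps i,
  S e_i = sum_j hS i j e_j.
Elements of H (and of the dual H*) are coordinate functions nat => 'k vanishing
outside {..<n}; for the dual, f i is the value f(e_i).\<close>

record 'k hopf_data =
  hdim :: nat
  hmu :: "nat \<Rightarrow> nat \<Rightarrow> nat \<Rightarrow> 'k"
  heta :: "nat \<Rightarrow> 'k"
  hdelta :: "nat \<Rightarrow> nat \<Rightarrow> nat \<Rightarrow> 'k"
  heps :: "nat \<Rightarrow> 'k"
  hS :: "nat \<Rightarrow> nat \<Rightarrow> 'k"

definition kd :: "nat \<Rightarrow> nat \<Rightarrow> 'k::field" where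
  "kd i j = (if i = j then 1 else 0)"

definition alg_closed :: "'k::field itself \<Rightarrow> bool" where
  "alg_closed _ \<longleftrightarrow> (\<forall>p :: 'k poly. degree p > 0 \<longrightarrow> (\<exists>x. poly p x = 0))"

definition hopf_algebra :: "'k::field hopf_data \<Rightarrow> bool" where
  "hopf_algebra H \<longleftrightarrow> (let n = hdim H; m = hmu H; u = heta H; d = hdelta H;
       e = heps H; s = hS H in
    \<comment> \<open>associativity\<close>
    (\<forall>i<n. \<forall>j<n. \<forall>k<n. \<forall>l<n.
        (\<Sum>r<n. m i j r * m r k l) = (\<Sum>r<n. m j k r * m i r l)) \<and>
    \<comment> \<open>unit\<close>
    (\<forall>i<n. \<forall>l<n. (\<Sum>r<n. u r * m r i l) = kd i l \<and> (\<Sum>r<n. u r * m i r l) = kd i l) \<and>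
    \<comment> \<open>coassociativity\<close>
    (\<forall>i<n. \<forall>a<n. \<forall>b<n. \<forall>c<n.
        (\<Sum>r<n. d i r c * d r a b) = (\<Sum>r<n. d i a r * d r b c)) \<and>
    \<comment> \<open>counit\<close>
    (\<forall>i<n. \<forall>l<n. (\<Sum>j<n. e j * d i j l) = kd i l \<and> (\<Sum>j<n. e j * d i l j) = kd i l) \<and>
    \<comment> \<open>comultiplication is an algebra map\<close>
    (\<forall>i<n. \<forall>j<n. \<forall>a<n. \<forall>b<n.
        (\<Sum>r<n. m i j r * d r a b) =
        (\<Sum>p<n. \<Sum>q<n. \<Sum>r<n. \<Sum>t<n. d i p q * d j r t * m p r a * m q t b)) \<and>
    (\<forall>a<n. \<forall>b<n. (\<Sum>r<n. u r * d r a b) = u a * u b) \<and>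
    \<comment> \<open>counit is an algebra map\<close>
    (\<forall>i<n. \<forall>j<n. (\<Sum>r<n. m i j r * e r) = e i * e j) \<and>
    (\<Sum>r<n. u r * e r) = 1 \<and>
    \<comment> \<open>antipode axioms: m (S x id) Delta = eta eps = m (id x S) Delta\<close>
    (\<forall>i<n. \<forall>l<n.
        (\<Sum>p<n. \<Sum>q<n. \<Sum>r<n. d i p q * s p r * m r q l) = e i * u l \<and>
        (\<Sum>p<n. \<Sum>q<n. \<Sum>r<n. d i p q * s q r * m p r l) = e i * u l))"

definition vecs :: "nat \<Rightarrow> (nat \<Rightarrow> 'k::field) set" where
  "vecs d = {v. \<forall>a\<ge>d. v a = 0}"

text \<open>A d-dimensional left H-module: rho i is the d x d matrix of the action of e_i.\<close>
definition is_module :: "'k::field hopf_data \<Rightarrow> nat \<Rightarrow> (nat \<Rightarrow> nat \<Rightarrow> nat \<Rightarrow> 'k) \<Rightarrow> bool" where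
  "is_module H d rho \<longleftrightarrow>
     (\<forall>i<hdim H. \<forall>j<hdim H. \<forall>a<d. \<forall>b<d.
        (\<Sum>c<d. rho i a c * rho j c b) = (\<Sum>r<hdim H. hmu H i j r * rho r a b)) \<and>
     (\<forall>a<d. \<forall>b<d. (\<Sum>r<hdim H. heta H r * rho r a b) = kd a b)"

definition act :: "nat \<Rightarrow> (nat \<Rightarrow> nat \<Rightarrow> nat \<Rightarrow> 'k::field) \<Rightarrow> nat \<Rightarrow> (nat \<Rightarrow> 'k) \<Rightarrow> (nat \<Rightarrow> 'k)" where
  "act d rho i v = (\<lambda>a. if a < d then (\<Sum>b<d. rho i a b * v b) else 0)"

definition lin_subspace :: "nat \<Rightarrow> (nat \<Rightarrow> 'k::field) set \<Rightarrow> bool" where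
  "lin_subspace d W \<longleftrightarrow> W \<subseteq> vecs d \<and> (\<lambda>_. 0) \<in> W \<and>
     (\<forall>v\<in>W. \<forall>w\<in>W. (\<lambda>a. v a + w a) \<in> W) \<and> (\<forall>c. \<forall>v\<in>W. (\<lambda>a. c * v a) \<in> W)"

definition invariant :: "'k::field hopf_data \<Rightarrow> nat \<Rightarrow> (nat \<Rightarrow> nat \<Rightarrow> nat \<Rightarrow> 'k) \<Rightarrow> (nat \<Rightarrow> 'k) set \<Rightarrow> bool" where
  "invariant H d rho W \<longleftrightarrow> (\<forall>i<hdim H. \<forall>w\<in>W. act d rho i w \<in> W)"

definition submodule :: "'k::field hopf_data \<Rightarrow> nat \<Rightarrow> (nat \<Rightarrow> nat \<Rightarrow> nat \<Rightarrow> 'k) \<Rightarrow> (nat \<Rightarrow> 'k) set \<Rightarrow> bool" where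
  "submodule H d rho W \<longleftrightarrow> lin_subspace d W \<and> invariant H d rho W"

definition irreducible_module :: "'k::field hopf_data \<Rightarrow> nat \<Rightarrow> (nat \<Rightarrow> nat \<Rightarrow> nat \<Rightarrow> 'k) \<Rightarrow> bool" where
  "irreducible_module H d rho \<longleftrightarrow> is_module H d rho \<and> d > 0 \<and>
     (\<forall>W. submodule H d rho W \<longrightarrow> W = {\<lambda>_. 0} \<or> W = vecs d)"

definition semisimple :: "'k::field hopf_data \<Rightarrow> bool" where
  "semisimple H \<longleftrightarrow> (\<forall>d rho. is_module H d rho \<longrightarrow>
     (\<forall>W. submodule H d rho W \<longrightarrow>
        (\<exists>W'. submodule H d rho W' \<and> W \<inter> W' = {\<lambda>_. 0} \<and>
              {(\<lambda>a. w a + w' a) | w w'. w \<in> W \<and> w' \<in> W'} = vecs d)))"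

definition character :: "'k::field hopf_data \<Rightarrow> nat \<Rightarrow> (nat \<Rightarrow> nat \<Rightarrow> nat \<Rightarrow> 'k) \<Rightarrow> (nat \<Rightarrow> 'k)" where
  "character H d rho = (\<lambda>i. if i < hdim H then (\<Sum>a<d. rho i a a) else 0)"

definition hone :: "'k::field hopf_data \<Rightarrow> (nat \<Rightarrow> 'k)" where
  "hone H = (\<lambda>l. if l < hdim H then heta H l else 0)"

text \<open>LKer_V = {h | sum h_1 (x) h_2 . v = h (x) v for all v in V}, computed in coordinates of H (x) V.\<close>
definition LKer :: "'k::field hopf_data \<Rightarrow> nat \<Rightarrow> (nat \<Rightarrow> nat \<Rightarrow> nat \<Rightarrow> 'k) \<Rightarrow> (nat \<Rightarrow> 'k) set" where
  "LKer H d rho = {h \<in> vecs (hdim H). \<forall>v \<in> vecs d. \<forall>p<hdim H. \<forall>a<d.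
      (\<Sum>i<hdim H. h i * (\<Sum>q<hdim H. hdelta H i p q * (\<Sum>b<d. rho q a b * v b))) = h p * v a}"

definition faithful_char :: "'k::field hopf_data \<Rightarrow> nat \<Rightarrow> (nat \<Rightarrow> nat \<Rightarrow> nat \<Rightarrow> 'k) \<Rightarrow> bool" where
  "faithful_char H d rho \<longleftrightarrow> LKer H d rho = {(\<lambda>l. c * hone H l) | c. True}"

definition lin_span :: "(nat \<Rightarrow> 'k::field) set \<Rightarrow> (nat \<Rightarrow> 'k) set" where
  "lin_span X = {f. \<exists>S c. finite S \<and> S \<subseteq> X \<and> f = (\<lambda>i. \<Sum>x\<in>S. c x * x i)}"

definition RH :: "'k::field hopf_data \<Rightarrow> (nat \<Rightarrow> 'k) set" where
  "RH H = lin_span {character H d rho | d rho. irreducible_module H d rho}"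

definition conv :: "'k::field hopf_data \<Rightarrow> (nat \<Rightarrow> 'k) \<Rightarrow> (nat \<Rightarrow> 'k) \<Rightarrow> (nat \<Rightarrow> 'k)" where
  "conv H f g = (\<lambda>i. if i < hdim H then
      (\<Sum>p<hdim H. \<Sum>q<hdim H. hdelta H i p q * f p * g q) else 0)"

definition dual_one :: "'k::field hopf_data \<Rightarrow> (nat \<Rightarrow> 'k)" where
  "dual_one H = (\<lambda>i. if i < hdim H then heps H i else 0)"

definition dpow :: "'k::field hopf_data \<Rightarrow> (nat \<Rightarrow> 'k) \<Rightarrow> nat \<Rightarrow> (nat \<Rightarrow> 'k)" where
  "dpow H \<sigma> m = (conv H \<sigma> ^^ m) (dual_one H)"

text \<open>Grouplike in H*: Delta_{H*}(sigma) = sigma (x) sigma and eps_{H*}(sigma) = 1, i.e.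
sigma(e_i e_j) = sigma(e_i) sigma(e_j) and sigma(1) = 1.\<close>
definition grouplike_dual :: "'k::field hopf_data \<Rightarrow> (nat \<Rightarrow> 'k) \<Rightarrow> bool" where
  "grouplike_dual H \<sigma> \<longleftrightarrow> \<sigma> \<in> vecs (hdim H) \<and>
     (\<forall>i<hdim H. \<forall>j<hdim H. (\<Sum>r<hdim H. hmu H i j r * \<sigma> r) = \<sigma> i * \<sigma> j) \<and>
     (\<Sum>r<hdim H. heta H r * \<sigma> r) = 1"

end

theory Submission
  imports Defs "HOL-Library.Function_Algebras"
begin


definition sc :: "'a::field \<Rightarrow> (nat \<Rightarrow> 'a) \<Rightarrow> (nat \<Rightarrow> 'a)" where
  "sc c v = (\<lambda>i. c * v i)"

interpretation fv: vector_space "sc :: 'a::field \<Rightarrow> (nat \<Rightarrow> 'a) \<Rightarrow> (nat \<Rightarrow> 'a)"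
  by unfold_locales (auto simp: sc_def fun_eq_iff algebra_simps)

lemma sc_apply[simp]: "sc c v i = c * v i" by (simp add: sc_def)

lemma fun_sum_apply: "(\<Sum>x\<in>S. f x) i = (\<Sum>x\<in>S. f x i)" for f :: "'b \<Rightarrow> nat \<Rightarrow> 'a::comm_monoid_add"
  by (induction S rule: infinite_finite_induct) auto

definition dl :: "nat \<Rightarrow> nat \<Rightarrow> 'a::field" where
  "dl j = (\<lambda>i. if i = j then 1 else 0)"

lemma vecs_subspace: "fv.subspace (vecs d)"
  by (auto simp: fv.subspace_def vecs_def)

lemma dl_vecs: "j < d \<Longrightarrow> dl j \<in> vecs d"
  by (auto simp: dl_def vecs_def)

lemma vecs_expand: assumes "v \<in> vecs d" shows "v = (\<Sum>j<d. sc (v j) (dl j))"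
proof (rule ext)
  fix x
  note v = assms
  show "v x = (\<Sum>j<d. sc (v j) (dl j)) x"
    using v by (cases "x < d") (auto simp: fun_sum_apply dl_def vecs_def if_distrib cong: if_cong)
qed

lemma vecs_span: "vecs d = fv.span (dl ` {..<d})"
proof
  show "vecs d \<subseteq> fv.span (dl ` {..<d})"
  proof
    fix v assume v: "v \<in> vecs d"
    show "v \<in> fv.span (dl ` {..<d})"
      apply (subst vecs_expand[OF v])
      by (intro fv.span_sum fv.span_scale fv.span_base) auto
  qed
  show "fv.span (dl ` {..<d}) \<subseteq> vecs d"
    by (rule fv.span_minimal) (auto simp: vecs_subspace dl_vecs)
qed

lemma dl_inj: "inj (dl :: nat \<Rightarrow> nat \<Rightarrow> 'a::field)"
  by (auto simp: inj_def dl_def fun_eq_iff split: if_splits)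

lemma card_dl: "card (dl ` {..<d} :: (nat \<Rightarrow> 'a::field) set) = d"
  by (simp add: card_image inj_on_subset[OF dl_inj])

lemma lin_span_eq: "lin_span X = fv.span X"
  unfolding lin_span_def fv.span_explicit
  by (auto simp: fun_eq_iff fun_sum_apply)

lemma subspace_lin: "lin_subspace d W \<Longrightarrow> fv.subspace W"
  by (auto simp: lin_subspace_def fv.subspace_def zero_fun_def plus_fun_def sc_def)

lemma indep_spans:
  assumes "fv.independent B" "B \<subseteq> fv.span S" "finite S" "card S \<le> card B"
  shows "fv.span S \<subseteq> fv.span B"
proof
  fix v assume v: "v \<in> fv.span S"
  show "v \<in> fv.span B"
  proof (rule ccontr)
    assume nv: "v \<notin> fv.span B"
    have fB: "finite B" using fv.independent_span_bound[OF assms(3,1,2)] by auto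
    have "fv.independent (insert v B)" using nv assms(1) by (rule fv.independent_insertI)
    moreover have "insert v B \<subseteq> fv.span S" using assms(2) v by auto
    ultimately have "card (insert v B) \<le> card S" using fv.independent_span_bound[OF assms(3)] by blast
    moreover have "v \<notin> B" using nv fv.span_base by blast
    ultimately show False using fB assms(4) by simp
  qed
qed


locale hopf =
  fixes H :: "'k::field_char_0 hopf_data"
  assumes hopf: "hopf_algebra H"
begin

abbreviation "nn \<equiv> hdim H"
abbreviation "mm \<equiv> hmu H"
abbreviation "uu \<equiv> heta H"
abbreviation "dd \<equiv> hdelta H"
abbreviation "ee \<equiv> heps H"
abbreviation "ss \<equiv> hS H"

lemmas hopf_conj = hopf[unfolded hopf_algebra_def Let_def]

lemma ax_assoc: "i<nn \<Longrightarrow> j<nn \<Longrightarrow> k<nn \<Longrightarrow> l<nn \<Longrightarrow>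
    (\<Sum>r<nn. mm i j r * mm r k l) = (\<Sum>r<nn. mm j k r * mm i r l)"
  using hopf_conj[THEN conjunct1] by blast
lemma ax_unitL: "i<nn \<Longrightarrow> l<nn \<Longrightarrow> (\<Sum>r<nn. uu r * mm r i l) = kd i l"
  using hopf_conj[THEN conjunct2, THEN conjunct1] by blast
lemma ax_unitR: "i<nn \<Longrightarrow> l<nn \<Longrightarrow> (\<Sum>r<nn. uu r * mm i r l) = kd i l"
  using hopf_conj[THEN conjunct2, THEN conjunct1] by blast
lemma ax_coassoc: "i<nn \<Longrightarrow> a<nn \<Longrightarrow> b<nn \<Longrightarrow> c<nn \<Longrightarrow>
        (\<Sum>r<nn. dd i r c * dd r a b) = (\<Sum>r<nn. dd i a r * dd r b c)"
  using hopf_conj[THEN conjunct2, THEN conjunct2, THEN conjunct1] by blast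
lemma ax_counitL: "i<nn \<Longrightarrow> l<nn \<Longrightarrow> (\<Sum>j<nn. ee j * dd i j l) = kd i l"
  using hopf_conj[THEN conjunct2, THEN conjunct2, THEN conjunct2, THEN conjunct1] by blast
lemma ax_counitR: "i<nn \<Longrightarrow> l<nn \<Longrightarrow> (\<Sum>j<nn. ee j * dd i l j) = kd i l"
  using hopf_conj[THEN conjunct2, THEN conjunct2, THEN conjunct2, THEN conjunct1] by blast
lemma ax_dmult: "i<nn \<Longrightarrow> j<nn \<Longrightarrow> a<nn \<Longrightarrow> b<nn \<Longrightarrow>
        (\<Sum>r<nn. mm i j r * dd r a b) =
        (\<Sum>p<nn. \<Sum>q<nn. \<Sum>r<nn. \<Sum>t<nn. dd i p q * dd j r t * mm p r a * mm q t b)"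
  using hopf_conj[THEN conjunct2, THEN conjunct2, THEN conjunct2, THEN conjunct2, THEN conjunct1] by blast
lemma ax_dunit: "a<nn \<Longrightarrow> b<nn \<Longrightarrow> (\<Sum>r<nn. uu r * dd r a b) = uu a * uu b"
  using hopf_conj[THEN conjunct2, THEN conjunct2, THEN conjunct2, THEN conjunct2, THEN conjunct2, THEN conjunct1] by blast
lemma ax_emult: "i<nn \<Longrightarrow> j<nn \<Longrightarrow> (\<Sum>r<nn. mm i j r * ee r) = ee i * ee j"
  using hopf_conj[THEN conjunct2, THEN conjunct2, THEN conjunct2, THEN conjunct2, THEN conjunct2, THEN conjunct2, THEN conjunct1] by blast
lemma ax_eunit: "(\<Sum>r<nn. uu r * ee r) = 1"
  using hopf_conj[THEN conjunct2, THEN conjunct2, THEN conjunct2, THEN conjunct2, THEN conjunct2, THEN conjunct2, THEN conjunct2, THEN conjunct1] by blast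
lemma ax_antiR: "i<nn \<Longrightarrow> l<nn \<Longrightarrow>
        (\<Sum>p<nn. \<Sum>q<nn. \<Sum>r<nn. dd i p q * ss q r * mm p r l) = ee i * uu l"
  using hopf_conj[THEN conjunct2, THEN conjunct2, THEN conjunct2, THEN conjunct2, THEN conjunct2, THEN conjunct2, THEN conjunct2, THEN conjunct2] by blast


lemma kd_sym: "kd i j = kd j i" by (simp add: kd_def)

definition mulv :: "(nat \<Rightarrow> 'k) \<Rightarrow> (nat \<Rightarrow> 'k) \<Rightarrow> (nat \<Rightarrow> 'k)" where
  "mulv x y = (\<lambda>l. if l < nn then (\<Sum>i<nn. \<Sum>j<nn. x i * y j * mm i j l) else 0)"

definition ev :: "(nat \<Rightarrow> 'k) \<Rightarrow> (nat \<Rightarrow> 'k) \<Rightarrow> 'k" where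
  "ev f x = (\<Sum>i<nn. f i * x i)"

definition Tg :: "(nat \<Rightarrow> 'k) \<Rightarrow> (nat \<Rightarrow> 'k) \<Rightarrow> (nat \<Rightarrow> 'k)" where
  "Tg g h = (\<lambda>p. if p < nn then (\<Sum>i<nn. h i * (\<Sum>q<nn. dd i p q * g q)) else 0)"

abbreviation "one \<equiv> hone H"
abbreviation "eps \<equiv> dual_one H"

lemma one_vecs: "one \<in> vecs nn" by (simp add: hone_def vecs_def)
lemma eps_vecs: "eps \<in> vecs nn" by (simp add: dual_one_def vecs_def)
lemma mulv_vecs: "mulv x y \<in> vecs nn" by (simp add: mulv_def vecs_def)
lemma Tg_vecs: "Tg g h \<in> vecs nn" by (simp add: Tg_def vecs_def)
lemma conv_vecs: "conv H f g \<in> vecs nn" by (simp add: conv_def vecs_def)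

lemma vecsD: "v \<in> vecs d \<Longrightarrow> \<not> i < d \<Longrightarrow> v i = 0" by (simp add: vecs_def)

lemma mulv_assoc: "mulv (mulv x y) z = mulv x (mulv y z)"
proof (rule ext)
  fix l
  show "mulv (mulv x y) z l = mulv x (mulv y z) l"
  proof (cases "l < nn")
    case True
    have "mulv (mulv x y) z l = (\<Sum>r<nn. \<Sum>k<nn. (\<Sum>i<nn. \<Sum>j<nn. x i * y j * mm i j r) * z k * mm r k l)"
      using True by (simp add: mulv_def)
    also have "\<dots> = (\<Sum>i<nn. \<Sum>j<nn. \<Sum>k<nn. x i * y j * z k * (\<Sum>r<nn. mm i j r * mm r k l))"
      apply (simp only: sum_distrib_left sum_distrib_right sum.cartesian_product)
      apply (rule sum.reindex_bij_witness[where i="\<lambda>(i,j,k,r). (r,k,i,j)" and j="\<lambda>(r,k,i,j). (i,j,k,r)"])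
      by (auto simp: mult_ac)
    also have "\<dots> = (\<Sum>i<nn. \<Sum>j<nn. \<Sum>k<nn. x i * y j * z k * (\<Sum>r<nn. mm j k r * mm i r l))"
      using True by (intro sum.cong refl) (simp add: ax_assoc)
    also have "\<dots> = (\<Sum>i<nn. \<Sum>r<nn. x i * (\<Sum>j<nn. \<Sum>k<nn. y j * z k * mm j k r) * mm i r l)"
      apply (simp only: sum_distrib_left sum_distrib_right sum.cartesian_product)
      apply (rule sum.reindex_bij_witness[where i="\<lambda>(i,r,j,k). (i,j,k,r)" and j="\<lambda>(i,j,k,r). (i,r,j,k)"])
      by (auto simp: mult_ac)
    also have "\<dots> = mulv x (mulv y z) l"
      using True by (simp add: mulv_def)
    finally show ?thesis .
  qed (simp add: mulv_def)
qed

lemma sum_ind: "l < (n::nat) \<Longrightarrow> (\<Sum>j<n. x j * (if j = l then 1 else 0)) = (x l :: 'a::comm_ring_1)"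
proof -
  assume l: "l < n"
  have "(\<Sum>j<n. x j * (if j = l then 1 else 0)) = (\<Sum>j<n. if j = l then x j else 0)"
    by (intro sum.cong) auto
  also have "\<dots> = x l" using l by (subst sum.delta) auto
  finally show ?thesis .
qed

lemma sum_ind2: "l < (n::nat) \<Longrightarrow> (\<Sum>j<n. x j * (if l = j then 1 else 0)) = (x l :: 'a::comm_ring_1)"
  using sum_ind[of l n x] by (simp add: eq_commute[of l])

lemma mulv_one_left: assumes "x \<in> vecs nn" shows "mulv one x = x"
proof (rule ext)
  fix l
  show "mulv one x l = x l"
  proof (cases "l < nn")
    case True
    have "mulv one x l = (\<Sum>i<nn. \<Sum>j<nn. uu i * x j * mm i j l)"
      using True by (simp add: mulv_def hone_def)
    also have "\<dots> = (\<Sum>j<nn. x j * (\<Sum>i<nn. uu i * mm i j l))"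
      by (subst sum.swap) (simp add: sum_distrib_left mult_ac)
    also have "\<dots> = (\<Sum>j<nn. x j * kd j l)"
      using True by (intro sum.cong refl) (simp add: ax_unitL)
    also have "\<dots> = x l" using True by (simp add: kd_def sum_ind sum_ind2)
    finally show ?thesis .
  qed (use assms in \<open>simp add: mulv_def vecs_def\<close>)
qed

lemma mulv_one_right: assumes "x \<in> vecs nn" shows "mulv x one = x"
proof (rule ext)
  fix l
  show "mulv x one l = x l"
  proof (cases "l < nn")
    case True
    have "mulv x one l = (\<Sum>i<nn. \<Sum>j<nn. x i * uu j * mm i j l)"
      using True by (simp add: mulv_def hone_def)
    also have "\<dots> = (\<Sum>i<nn. x i * (\<Sum>j<nn. uu j * mm i j l))"
      by (simp add: sum_distrib_left mult_ac)
    also have "\<dots> = (\<Sum>i<nn. x i * kd i l)"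
      using True by (intro sum.cong refl) (simp add: ax_unitR)
    also have "\<dots> = x l" using True by (simp add: kd_def sum_ind sum_ind2)
    finally show ?thesis .
  qed (use assms in \<open>simp add: mulv_def vecs_def\<close>)
qed

lemma mulv_add_left: "mulv (x + y) z = mulv x z + mulv y z"
  by (auto simp: mulv_def fun_eq_iff algebra_simps sum.distrib)
lemma mulv_add_right: "mulv z (x + y) = mulv z x + mulv z y"
  by (auto simp: mulv_def fun_eq_iff algebra_simps sum.distrib)
lemma mulv_sc_left: "mulv (sc c x) z = sc c (mulv x z)"
  by (auto simp: mulv_def fun_eq_iff sum_distrib_left mult_ac)
lemma mulv_sc_right: "mulv z (sc c x) = sc c (mulv z x)"
  by (auto simp: mulv_def fun_eq_iff sum_distrib_left mult_ac)
lemma mulv_zero_left[simp]: "mulv 0 z = 0"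
  by (auto simp: mulv_def fun_eq_iff)
lemma mulv_zero_right[simp]: "mulv z 0 = 0"
  by (auto simp: mulv_def fun_eq_iff)
lemma mulv_diff_left: "mulv (x - y) z = mulv x z - mulv y z"
  by (auto simp: mulv_def fun_eq_iff algebra_simps sum_subtractf)
lemma mulv_diff_right: "mulv z (x - y) = mulv z x - mulv z y"
  by (auto simp: mulv_def fun_eq_iff algebra_simps sum_subtractf)
lemma mulv_sum_left: "mulv (\<Sum>a\<in>A. f a) z = (\<Sum>a\<in>A. mulv (f a) z)"
proof (induction A rule: infinite_finite_induct)
  case (insert x F)
  have "mulv (sum f (insert x F)) z = mulv (f x + sum f F) z" using insert(1,2) by (subst sum.insert) auto
  also have "\<dots> = mulv (f x) z + (\<Sum>a\<in>F. mulv (f a) z)" by (simp only: mulv_add_left insert(3))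
  also have "\<dots> = (\<Sum>a\<in>insert x F. mulv (f a) z)" using insert(1,2) by (subst sum.insert) auto
  finally show ?case .
qed (simp_all add: mulv_def fun_eq_iff)

lemma ev_add_right: "ev f (x + y) = ev f x + ev f y"
  by (simp add: ev_def algebra_simps sum.distrib)
lemma ev_add_left: "ev (f + g) x = ev f x + ev g x"
  by (simp add: ev_def algebra_simps sum.distrib)
lemma ev_sc_right: "ev f (sc c x) = c * ev f x"
  by (simp add: ev_def sum_distrib_left mult_ac)
lemma ev_sc_left: "ev (sc c f) x = c * ev f x"
  by (simp add: ev_def sum_distrib_left mult_ac)
lemma ev_diff_right: "ev f (x - y) = ev f x - ev f y"
  by (simp add: ev_def algebra_simps sum_subtractf)
lemma ev_zero_right[simp]: "ev f 0 = 0" by (simp add: ev_def)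
lemma ev_zero_left[simp]: "ev 0 x = 0" by (simp add: ev_def)
lemma ev_sum_left: "ev (\<Sum>a\<in>A. f a) x = (\<Sum>a\<in>A. ev (f a) x)"
  by (simp add: ev_def fun_sum_apply sum_distrib_right) (rule sum.swap)
lemma ev_sum_right: "ev x (\<Sum>a\<in>A. f a) = (\<Sum>a\<in>A. ev x (f a))"
  by (simp add: ev_def fun_sum_apply sum_distrib_left) (rule sum.swap)
lemma ev_dl_right: "p < nn \<Longrightarrow> ev f (dl p) = f p"
  by (simp add: ev_def dl_def sum_ind)
lemma ev_dl_left: "p < nn \<Longrightarrow> ev (dl p) f = f p"
  using sum_ind[of p nn f] by (simp add: ev_def dl_def mult.commute)

lemma sep_right: assumes "a \<in> vecs nn" "b \<in> vecs nn" "\<And>k. k \<in> vecs nn \<Longrightarrow> ev k a = ev k b"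
  shows "a = b"
proof (rule ext)
  fix p show "a p = b p"
  proof (cases "p < nn")
    case True
    then show ?thesis using assms(3)[OF dl_vecs[OF True]] by (simp add: ev_dl_left)
  qed (use assms in \<open>simp add: vecs_def\<close>)
qed

lemma sep_left: assumes "a \<in> vecs nn" "b \<in> vecs nn" "\<And>k. k \<in> vecs nn \<Longrightarrow> ev a k = ev b k"
  shows "a = b"
proof (rule ext)
  fix p show "a p = b p"
  proof (cases "p < nn")
    case True
    then show ?thesis using assms(3)[OF dl_vecs[OF True]] by (simp add: ev_dl_right)
  qed (use assms in \<open>simp add: vecs_def\<close>)
qed

lemma ev_conv: "ev (conv H f g) h = ev f (Tg g h)"
proof -
  have "ev (conv H f g) h = (\<Sum>i<nn. (\<Sum>p<nn. \<Sum>q<nn. dd i p q * f p * g q) * h i)"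
    by (simp add: ev_def conv_def)
  also have "\<dots> = (\<Sum>p<nn. f p * (\<Sum>i<nn. h i * (\<Sum>q<nn. dd i p q * g q)))"
    apply (simp only: sum_distrib_left sum_distrib_right sum.cartesian_product)
    apply (rule sum.reindex_bij_witness[where i="\<lambda>(p,i,q). (i,p,q)" and j="\<lambda>(i,p,q). (p,i,q)"])
    by (auto simp: mult_ac)
  also have "\<dots> = ev f (Tg g h)" by (simp add: ev_def Tg_def)
  finally show ?thesis .
qed

lemma conv_assoc: "conv H (conv H a b) c = conv H a (conv H b c)"
proof (rule ext)
  fix i show "conv H (conv H a b) c i = conv H a (conv H b c) i"
  proof (cases "i < nn")
    case True
    have "conv H (conv H a b) c i = (\<Sum>p<nn. \<Sum>q<nn. dd i p q * (\<Sum>r<nn. \<Sum>s<nn. dd p r s * a r * b s) * c q)"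
      using True by (simp add: conv_def)
    also have "\<dots> = (\<Sum>r<nn. \<Sum>s<nn. \<Sum>q<nn. a r * b s * c q * (\<Sum>p<nn. dd i p q * dd p r s))"
      apply (simp only: sum_distrib_left sum_distrib_right sum.cartesian_product)
      apply (rule sum.reindex_bij_witness[where i="\<lambda>(r,s,q,p). (p,q,r,s)" and j="\<lambda>(p,q,r,s). (r,s,q,p)"])
      by (auto simp: mult_ac)
    also have "\<dots> = (\<Sum>r<nn. \<Sum>s<nn. \<Sum>q<nn. a r * b s * c q * (\<Sum>p<nn. dd i r p * dd p s q))"
      using True by (intro sum.cong refl) (simp add: ax_coassoc)
    also have "\<dots> = (\<Sum>r<nn. \<Sum>p<nn. dd i r p * a r * (\<Sum>s<nn. \<Sum>q<nn. dd p s q * b s * c q))"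
      apply (simp only: sum_distrib_left sum_distrib_right sum.cartesian_product)
      apply (rule sum.reindex_bij_witness[where i="\<lambda>(r,p,s,q). (r,s,q,p)" and j="\<lambda>(r,s,q,p). (r,p,s,q)"])
      by (auto simp: mult_ac)
    also have "\<dots> = conv H a (conv H b c) i"
      using True by (simp add: conv_def)
    finally show ?thesis .
  qed (simp add: conv_def)
qed

lemma conv_eps_left: assumes "f \<in> vecs nn" shows "conv H eps f = f"
proof (rule ext)
  fix i show "conv H eps f i = f i"
  proof (cases "i < nn")
    case True
    have "conv H eps f i = (\<Sum>p<nn. \<Sum>q<nn. dd i p q * ee p * f q)"
      using True by (simp add: conv_def dual_one_def)
    also have "\<dots> = (\<Sum>q<nn. f q * (\<Sum>p<nn. ee p * dd i p q))"
      by (subst sum.swap) (simp add: sum_distrib_left mult_ac)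
    also have "\<dots> = (\<Sum>q<nn. f q * kd i q)"
      using True by (intro sum.cong refl) (simp add: ax_counitL)
    also have "\<dots> = f i" using True by (simp add: kd_def sum_ind sum_ind2)
    finally show ?thesis .
  qed (use assms in \<open>simp add: conv_def vecs_def\<close>)
qed

lemma conv_eps_right: assumes "f \<in> vecs nn" shows "conv H f eps = f"
proof (rule ext)
  fix i show "conv H f eps i = f i"
  proof (cases "i < nn")
    case True
    have "conv H f eps i = (\<Sum>p<nn. \<Sum>q<nn. dd i p q * f p * ee q)"
      using True by (simp add: conv_def dual_one_def)
    also have "\<dots> = (\<Sum>p<nn. f p * (\<Sum>q<nn. ee q * dd i p q))"
      by (simp add: sum_distrib_left mult_ac)
    also have "\<dots> = (\<Sum>p<nn. f p * kd i p)"
      using True by (intro sum.cong refl) (simp add: ax_counitR)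
    also have "\<dots> = f i" using True by (simp add: kd_def sum_ind sum_ind2)
    finally show ?thesis .
  qed (use assms in \<open>simp add: conv_def vecs_def\<close>)
qed

lemma Tg_eps: assumes "h \<in> vecs nn" shows "Tg eps h = h"
proof (rule ext)
  fix p show "Tg eps h p = h p"
  proof (cases "p < nn")
    case True
    have "Tg eps h p = (\<Sum>i<nn. h i * (\<Sum>q<nn. ee q * dd i p q))"
      using True by (simp add: Tg_def dual_one_def mult_ac)
    also have "\<dots> = (\<Sum>i<nn. h i * kd i p)"
      using True by (intro sum.cong refl) (simp add: ax_counitR)
    also have "\<dots> = h p" using True by (simp add: kd_def sum_ind sum_ind2)
    finally show ?thesis .
  qed (use assms in \<open>simp add: Tg_def vecs_def\<close>)
qed

lemma Tg_comp: "Tg f (Tg g h) = Tg (conv H f g) h"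
  by (rule sep_right[OF Tg_vecs Tg_vecs])
     (simp add: ev_conv[symmetric] conv_assoc)

lemma Tg_add: "Tg g (x + y) = Tg g x + Tg g y"
  by (auto simp: Tg_def fun_eq_iff algebra_simps sum.distrib)
lemma Tg_sc: "Tg g (sc c x) = sc c (Tg g x)"
  by (auto simp: Tg_def fun_eq_iff sum_distrib_left mult_ac)
lemma Tg_diff: "Tg g (x - y) = Tg g x - Tg g y"
  by (auto simp: Tg_def fun_eq_iff algebra_simps sum_subtractf)
lemma Tg_zero[simp]: "Tg g 0 = 0"
  by (auto simp: Tg_def fun_eq_iff)

end


context hopf
begin

abbreviation "gl \<equiv> grouplike_dual H"

lemma gl_vecs: "gl s \<Longrightarrow> s \<in> vecs nn" by (simp add: grouplike_dual_def)

lemma gl_mulv: assumes g: "gl s" shows "ev s (mulv x y) = ev s x * ev s y"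
proof -
  have ax: "\<And>i j. i<nn \<Longrightarrow> j<nn \<Longrightarrow> (\<Sum>r<nn. mm i j r * s r) = s i * s j"
    using g by (simp add: grouplike_dual_def)
  have "ev s (mulv x y) = (\<Sum>l<nn. s l * (\<Sum>i<nn. \<Sum>j<nn. x i * y j * mm i j l))"
    by (simp add: ev_def mulv_def)
  also have "\<dots> = (\<Sum>i<nn. \<Sum>j<nn. x i * y j * (\<Sum>l<nn. mm i j l * s l))"
    apply (simp only: sum_distrib_left sum_distrib_right sum.cartesian_product)
    apply (rule sum.reindex_bij_witness[where i="\<lambda>(i,j,l). (l,i,j)" and j="\<lambda>(l,i,j). (i,j,l)"])
    by (auto simp: mult_ac)
  also have "\<dots> = (\<Sum>i<nn. \<Sum>j<nn. x i * y j * (s i * s j))"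
    by (intro sum.cong refl) (simp add: ax)
  also have "\<dots> = ev s x * ev s y"
    by (simp add: ev_def sum_product mult_ac)
  finally show ?thesis .
qed

lemma gl_one: "gl s \<Longrightarrow> ev s one = 1"
  by (simp add: grouplike_dual_def ev_def hone_def mult.commute)

lemma sum_ind3: "l < (n::nat) \<Longrightarrow> (\<Sum>j<n. (if j = l then 1 else 0) * x j) = (x l :: 'a::comm_ring_1)"
  using sum_ind[of l n x] by (simp add: mult.commute)

lemma mulv_dl: "i < nn \<Longrightarrow> j < nn \<Longrightarrow> mulv (dl i) (dl j) = (\<lambda>l. if l < nn then mm i j l else 0)"
proof (rule ext)
  fix l assume i: "i < nn" and j: "j < nn"
  show "mulv (dl i) (dl j) l = (if l < nn then mm i j l else 0)"
  proof (cases "l < nn")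
    case True
    have "mulv (dl i) (dl j) l = (\<Sum>a<nn. dl i a * (\<Sum>b<nn. dl j b * mm a b l))"
      using True by (simp add: mulv_def sum_distrib_left mult_ac)
    also have "\<dots> = (\<Sum>a<nn. dl i a * mm a j l)"
      by (intro sum.cong refl) (simp add: dl_def j sum_ind3)
    also have "\<dots> = mm i j l"
      using sum_ind3[OF i, of "\<lambda>a. mm a j l"] by (simp add: dl_def)
    finally show ?thesis using True by simp
  qed (simp add: mulv_def)
qed

lemma gl_intro: assumes "s \<in> vecs nn" "\<And>x y. ev s (mulv x y) = ev s x * ev s y" "ev s one = 1"
  shows "gl s"
  unfolding grouplike_dual_def
proof (intro conjI allI impI)
  show "s \<in> vecs nn" by fact
  fix i j assume i: "i < nn" and j: "j < nn"
  have "ev s (mulv (dl i) (dl j)) = (\<Sum>r<nn. mm i j r * s r)"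
    by (simp add: mulv_dl[OF i j] ev_def mult.commute cong: if_cong)
  then show "(\<Sum>r<nn. mm i j r * s r) = s i * s j"
    using assms(2)[of "dl i" "dl j"] by (simp add: ev_dl_right i j)
next
  show "(\<Sum>r<nn. uu r * s r) = 1" using assms(3) by (simp add: ev_def hone_def mult.commute)
qed

lemma eps_gl: "gl eps"
proof -
  have a: "\<And>f::nat\<Rightarrow>'k. (\<Sum>x<nn. f x * (if x < nn then ee x else 0)) = (\<Sum>x<nn. f x * ee x)"
    by (intro sum.cong) auto
  show ?thesis
    unfolding grouplike_dual_def using eps_vecs
    by (simp add: a dual_one_def ax_emult ax_eunit)
qed

lemma Tg_mult: assumes g: "gl g" shows "Tg g (mulv x y) = mulv (Tg g x) (Tg g y)"
proof (rule ext)
  fix a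
  have ax: "\<And>i j. i<nn \<Longrightarrow> j<nn \<Longrightarrow> (\<Sum>r<nn. mm i j r * g r) = g i * g j"
    using g by (simp add: grouplike_dual_def)
  show "Tg g (mulv x y) a = mulv (Tg g x) (Tg g y) a"
  proof (cases "a < nn")
    case True
    have "Tg g (mulv x y) a = (\<Sum>l<nn. (\<Sum>i<nn. \<Sum>j<nn. x i * y j * mm i j l) * (\<Sum>b<nn. dd l a b * g b))"
      using True by (simp add: Tg_def mulv_def)
    also have "\<dots> = (\<Sum>i<nn. \<Sum>j<nn. \<Sum>b<nn. x i * y j * g b * (\<Sum>l<nn. mm i j l * dd l a b))"
      apply (simp only: sum_distrib_left sum_distrib_right sum.cartesian_product)
      apply (rule sum.reindex_bij_witness[where i="\<lambda>(i,j,b,l). (l,b,i,j)" and j="\<lambda>(l,b,i,j). (i,j,b,l)"])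
      by (auto simp: mult_ac)
    also have "\<dots> = (\<Sum>i<nn. \<Sum>j<nn. \<Sum>b<nn. x i * y j * g b *
        (\<Sum>p<nn. \<Sum>q<nn. \<Sum>r<nn. \<Sum>t<nn. dd i p q * dd j r t * mm p r a * mm q t b))"
      using True by (intro sum.cong refl) (simp add: ax_dmult)
    also have "\<dots> = (\<Sum>i<nn. \<Sum>j<nn. \<Sum>p<nn. \<Sum>q<nn. \<Sum>r<nn. \<Sum>t<nn.
        x i * y j * dd i p q * dd j r t * mm p r a * (\<Sum>b<nn. mm q t b * g b))"
      apply (simp only: sum_distrib_left sum_distrib_right sum.cartesian_product)
      apply (rule sum.reindex_bij_witness[where i="\<lambda>(i,j,p,q,r,t,b). (i,j,b,p,q,r,t)" and j="\<lambda>(i,j,b,p,q,r,t). (i,j,p,q,r,t,b)"])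
      by (auto simp: mult_ac)
    also have "\<dots> = (\<Sum>i<nn. \<Sum>j<nn. \<Sum>p<nn. \<Sum>q<nn. \<Sum>r<nn. \<Sum>t<nn.
        x i * y j * dd i p q * dd j r t * mm p r a * (g q * g t))"
      by (intro sum.cong refl) (simp add: ax)
    also have "\<dots> = (\<Sum>p<nn. \<Sum>r<nn. \<Sum>i<nn. \<Sum>j<nn. \<Sum>q<nn. \<Sum>t<nn. x i * dd i p q * g q * (y j * dd j r t * g t) * mm p r a)"
      apply (simp only: sum.cartesian_product)
      apply (rule sum.reindex_bij_witness[where i="\<lambda>(p,r,i,j,q,t). (i,j,p,q,r,t)" and j="\<lambda>(i,j,p,q,r,t). (p,r,i,j,q,t)"])
      by (auto simp: mult_ac)
    also have "\<dots> = (\<Sum>p<nn. \<Sum>r<nn. (\<Sum>i<nn. \<Sum>q<nn. x i * dd i p q * g q) * (\<Sum>j<nn. \<Sum>t<nn. y j * dd j r t * g t) * mm p r a)"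
      apply (simp only: sum_product)
      apply (simp only: sum_distrib_right)
      done
    also have "\<dots> = mulv (Tg g x) (Tg g y) a"
      using True by (simp add: Tg_def mulv_def sum_distrib_left mult.assoc)
    finally show ?thesis .
  qed (simp add: Tg_def mulv_def)
qed

lemma Tg_one: assumes g: "gl g" shows "Tg g one = one"
proof (rule ext)
  fix p show "Tg g one p = one p"
  proof (cases "p < nn")
    case True
    have "Tg g one p = (\<Sum>q<nn. g q * (\<Sum>i<nn. uu i * dd i p q))"
      using True apply (simp add: Tg_def hone_def sum_distrib_left)
      by (subst sum.swap) (simp add: mult_ac)
    also have "\<dots> = (\<Sum>q<nn. g q * (uu p * uu q))"
      using True by (intro sum.cong refl) (simp add: ax_dunit)
    also have "\<dots> = uu p * ev g one"
      by (simp add: ev_def hone_def sum_distrib_left mult_ac)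
    also have "\<dots> = one p" using True gl_one[OF g] by (simp add: hone_def)
    finally show ?thesis .
  qed (simp add: Tg_def hone_def)
qed

lemma conv_gl: assumes "gl f" "gl g" shows "gl (conv H f g)"
  by (rule gl_intro)
     (simp_all add: conv_vecs ev_conv Tg_mult Tg_one assms gl_mulv gl_one)

lemma dpow_Suc: "dpow H s (Suc m) = conv H s (dpow H s m)"
  by (simp add: dpow_def)

lemma dpow_0: "dpow H s 0 = eps"
  by (simp add: dpow_def)

lemma dpow_gl: "gl s \<Longrightarrow> gl (dpow H s m)"
  by (induction m) (simp_all add: dpow_0 dpow_Suc eps_gl conv_gl)

lemma dpow_vecs: "dpow H s m \<in> vecs nn"
  by (cases m) (simp_all add: dpow_0 dpow_Suc eps_vecs conv_vecs)

lemma dpow_add: "dpow H s (a + b) = conv H (dpow H s a) (dpow H s b)"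
  by (induction a) (simp_all add: dpow_0 dpow_Suc conv_eps_left dpow_vecs conv_assoc)

lemma dpow_1: "s \<in> vecs nn \<Longrightarrow> dpow H s (Suc 0) = s"
  by (simp add: dpow_Suc dpow_0 conv_eps_right)

lemma dpow_Suc': "s \<in> vecs nn \<Longrightarrow> dpow H s (Suc m) = conv H (dpow H s m) s"
  using dpow_add[of s m 1] by (simp add: dpow_1)

end


lemma fam_inj_indep:
  fixes v :: "nat \<Rightarrow> nat \<Rightarrow> 'a::field"
  assumes z: "\<And>a. (\<Sum>i<m. sc (a i) (v i)) = 0 \<Longrightarrow> (\<forall>i<m. a i = 0)"
  shows "inj_on v {..<m}" "fv.independent (v ` {..<m})"
proof -
  show inj: "inj_on v {..<m}"
  proof (rule inj_onI, rule ccontr)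
    fix i i' assume i: "i \<in> {..<m}" and i': "i' \<in> {..<m}" and eq: "v i = v i'" and ne: "i \<noteq> i'"
    define a where "a k = (if k = i then 1 else if k = i' then -1 else (0::'a))" for k
    have "\<And>k. sc (a k) (v k) = (if k = i then v k else 0) - (if k = i' then v k else 0)"
      using ne by (auto simp: a_def fun_eq_iff)
    then have "(\<Sum>k<m. sc (a k) (v k)) = (\<Sum>k<m. (if k = i then v k else 0)) - (\<Sum>k<m. (if k = i' then v k else 0))"
      by (simp add: sum_subtractf)
    also have "\<dots> = v i - v i'" using i i' by (simp add: sum.delta)
    also have "\<dots> = 0" using eq by simp
    finally have "\<forall>k<m. a k = 0" by (rule z)
    then have "a i = 0" using i by blast
    then show False by (simp add: a_def)
  qed
  show "fv.independent (v ` {..<m})"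
  proof (rule fv.independent_if_scalars_zero)
    show "finite (v ` {..<m})" by simp
    fix f x assume s: "(\<Sum>x\<in>v ` {..<m}. sc (f x) x) = 0" and x: "x \<in> v ` {..<m}"
    have "(\<Sum>i<m. sc (f (v i)) (v i)) = 0" using s by (simp add: sum.reindex[OF inj])
    then have "\<forall>i<m. f (v i) = 0" by (rule z)
    then show "f x = 0" using x by auto
  qed
qed

context hopf
begin

lemma ev_scl[simp]: "ev (\<lambda>a. c * f a) x = c * ev f x"
  by (simp add: ev_def sum_distrib_left mult_ac)

lemma ev_zerol'[simp]: "ev (\<lambda>a. 0) x = 0"
  by (simp add: ev_def)

lemma ev_span_zero: assumes "g \<in> fv.span B" "\<And>b. b \<in> B \<Longrightarrow> ev b h = 0" shows "ev g h = 0"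
proof -
  from assms(1) obtain t r where t: "finite t" "t \<subseteq> B" "g = (\<Sum>a\<in>t. sc (r a) a)"
    unfolding fv.span_explicit by blast
  show ?thesis using t assms(2) by (auto simp: ev_sum_left ev_sc_left intro!: sum.neutral)
qed

lemma span_of_sep:
  assumes G: "G \<subseteq> vecs nn"
    and sep: "\<And>h. h \<in> vecs nn \<Longrightarrow> (\<forall>g\<in>G. ev g h = 0) \<Longrightarrow> h = 0"
  shows "fv.span G = vecs nn"
proof -
  obtain B where B: "B \<subseteq> G" "fv.independent B" "G \<subseteq> fv.span B"
    using fv.maximal_independent_subset[of G] by blast
  have Bsp: "B \<subseteq> fv.span (dl ` {..<nn})" using B(1) G vecs_span by blast
  have fB: "finite B" using fv.independent_span_bound[OF _ B(2) Bsp] by simp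
  define r where "r = card B"
  obtain \<beta> where \<beta>: "bij_betw \<beta> {..<r} B"
    using ex_bij_betw_nat_finite[OF fB] unfolding r_def atLeast0LessThan by blast
  define c where "c i = (\<lambda>j. if j < r then \<beta> j i else 0)" for i
  have z: "\<forall>i<nn. a i = 0" if s: "(\<Sum>i<nn. sc (a i) (c i)) = 0" for a
  proof -
    define h where "h = (\<lambda>i. if i < nn then a i else 0)"
    have h: "h \<in> vecs nn" by (simp add: h_def vecs_def)
    have "ev b h = 0" if b: "b \<in> B" for b
    proof -
      obtain j where j: "j < r" "b = \<beta> j" using \<beta> b by (auto simp: bij_betw_def)
      have "0 = (\<Sum>i<nn. sc (a i) (c i)) j" using s by simp
      also have "\<dots> = (\<Sum>i<nn. a i * \<beta> j i)" using j by (simp add: fun_sum_apply c_def)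
      also have "\<dots> = ev b h" by (simp add: ev_def h_def j mult.commute)
      finally show ?thesis by simp
    qed
    then have "\<forall>g\<in>G. ev g h = 0" using B(3) by (auto intro: ev_span_zero)
    then have h0: "h = 0" using sep h by blast
    show ?thesis
    proof (intro allI impI)
      fix i assume "i < nn" then show "a i = 0" using fun_cong[OF h0, of i] by (simp add: h_def)
    qed
  qed
  have ci: "inj_on c {..<nn}" and cind: "fv.independent (c ` {..<nn})"
    using fam_inj_indep[where m=nn and v=c] z by blast+
  have "c ` {..<nn} \<subseteq> vecs r" by (auto simp: c_def vecs_def)
  then have "c ` {..<nn} \<subseteq> fv.span (dl ` {..<r})" using vecs_span by blast
  then have "card (c ` {..<nn}) \<le> card (dl ` {..<r} :: (nat \<Rightarrow> 'k) set)"
    using fv.independent_span_bound[OF _ cind] by simp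
  then have "nn \<le> r" using card_image[OF ci] card_dl[of r, where 'a='k] by simp
  then have "fv.span (dl ` {..<nn}) \<subseteq> fv.span B"
    using indep_spans[OF B(2) Bsp] card_dl[of nn, where 'a='k] r_def by simp
  then have "vecs nn \<subseteq> fv.span G" using vecs_span fv.span_mono[OF B(1)] by blast
  moreover have "fv.span G \<subseteq> vecs nn" using G by (intro fv.span_minimal vecs_subspace)
  ultimately show ?thesis by blast
qed

lemma vecs_sum: "(\<And>a. a \<in> A \<Longrightarrow> f a \<in> vecs d) \<Longrightarrow> (\<Sum>a\<in>A. f a) \<in> vecs d"
  using fv.subspace_sum[OF vecs_subspace] by blast

lemma vecs_sc: "v \<in> vecs d \<Longrightarrow> sc c v \<in> vecs d"
  by (simp add: vecs_def)

lemma gl_indep_aux: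
  assumes "finite S" "S \<subseteq> {s. gl s}" "(\<Sum>v\<in>S. sc (u v) v) = 0" "v \<in> S"
  shows "u v = 0"
  using assms
proof (induction S arbitrary: u v rule: finite_induct)
  case empty then show ?case by simp
next
  case (insert g0 S)
  have g0: "gl g0" using insert by auto
  have Sg: "\<And>v. v \<in> S \<Longrightarrow> gl v" using insert by auto
  have e0: "(\<Sum>v\<in>insert g0 S. u v * ev v y) = 0" for y
    using arg_cong[OF insert(5), of "\<lambda>f. ev f y"] by (simp add: ev_sum_left ev_sc_left)
  have key: "u v * (ev v x - ev g0 x) = 0" if v: "v \<in> S" for v x
  proof -
    have zsum: "(\<Sum>w\<in>S. sc (u w * (ev w x - ev g0 x)) w) = 0"
    proof (rule sep_left)
      show "(\<Sum>w\<in>S. sc (u w * (ev w x - ev g0 x)) w) \<in> vecs nn"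
        using Sg by (intro vecs_sum vecs_sc gl_vecs) auto
      show "0 \<in> vecs nn" by (simp add: vecs_def)
      fix y :: "nat \<Rightarrow> 'k" assume y: "y \<in> vecs nn"
      have "ev (\<Sum>w\<in>S. sc (u w * (ev w x - ev g0 x)) w) y = (\<Sum>w\<in>S. u w * (ev w x - ev g0 x) * ev w y)"
        by (simp add: ev_sum_left ev_sc_left)
      also have "\<dots> = (\<Sum>w\<in>insert g0 S. u w * (ev w x - ev g0 x) * ev w y)"
        using insert(1,2) by simp
      also have "\<dots> = (\<Sum>w\<in>insert g0 S. u w * ev w (mulv x y)) - ev g0 x * (\<Sum>w\<in>insert g0 S. u w * ev w y)"
      proof -
        have "(\<Sum>w\<in>insert g0 S. u w * ev w (mulv x y)) = (\<Sum>w\<in>insert g0 S. u w * (ev w x * ev w y))"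
          using g0 Sg by (intro sum.cong refl) (auto simp: gl_mulv)
        then show ?thesis
          by (simp add: sum_distrib_left sum_subtractf algebra_simps)
      qed
      also have "\<dots> = 0" using e0 by simp
      finally show "ev (\<Sum>w\<in>S. sc (u w * (ev w x - ev g0 x)) w) y = ev 0 y" by simp
    qed
    have Ssub: "S \<subseteq> {s. gl s}" using insert(4) by auto
    show ?thesis by (rule insert.IH[OF Ssub zsum v])
  qed
  have uS: "u v = 0" if v: "v \<in> S" for v
  proof -
    have ne: "v \<noteq> g0" using v insert(2) by auto
    have "\<exists>p<nn. v p \<noteq> g0 p"
    proof (rule ccontr)
      assume "\<not> ?thesis"
      then have "\<forall>p<nn. v p = g0 p" by blast
      then have "v = g0" using gl_vecs[OF Sg[OF v]] gl_vecs[OF g0]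
        by (auto simp: fun_eq_iff vecs_def) (metis not_less)
      then show False using ne by simp
    qed
    then obtain p where p: "p < nn" "v p \<noteq> g0 p" by blast
    have "u v * (ev v (dl p) - ev g0 (dl p)) = 0" using key[OF v] .
    then show ?thesis using p by (simp add: ev_dl_right)
  qed
  have "u g0 = 0"
  proof -
    have "u g0 * ev g0 one + (\<Sum>v\<in>S. u v * ev v one) = 0" using e0[of one] insert(1,2) by simp
    then show ?thesis using uS gl_one[OF g0] by simp
  qed
  then show ?case using uS insert(6) by auto
qed

lemma gl_indep: "A \<subseteq> {s. gl s} \<Longrightarrow> fv.independent A"
  unfolding fv.independent_explicit_finite_subsets
  using gl_indep_aux by (meson subset_trans)

lemma gl_finite: "A \<subseteq> {s. gl s} \<Longrightarrow> finite A"
proof -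
  assume A: "A \<subseteq> {s. gl s}"
  then have "A \<subseteq> fv.span (dl ` {..<nn})" using gl_vecs vecs_span by blast
  then show ?thesis using fv.independent_span_bound[OF _ gl_indep[OF A], of "dl ` {..<nn}"] by simp
qed

definition phi :: "(nat \<Rightarrow> 'k) \<Rightarrow> (nat \<Rightarrow> 'k)" where
  "phi s = (\<lambda>p. if p < nn then (\<Sum>r<nn. ss p r * s r) else 0)"

lemma phi_vecs: "phi s \<in> vecs nn" by (simp add: phi_def vecs_def)

lemma conv_phi: assumes g: "gl s" shows "conv H s (phi s) = eps"
proof (rule ext)
  fix i
  have ax: "\<And>i j. i<nn \<Longrightarrow> j<nn \<Longrightarrow> (\<Sum>r<nn. mm i j r * s r) = s i * s j"
    using g by (simp add: grouplike_dual_def)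
  show "conv H s (phi s) i = eps i"
  proof (cases "i < nn")
    case True
    have "conv H s (phi s) i = (\<Sum>p<nn. \<Sum>q<nn. \<Sum>r<nn. dd i p q * ss q r * (s p * s r))"
      using True by (simp add: conv_def phi_def sum_distrib_left mult_ac)
    also have "\<dots> = (\<Sum>p<nn. \<Sum>q<nn. \<Sum>r<nn. dd i p q * ss q r * (\<Sum>l<nn. mm p r l * s l))"
      by (intro sum.cong refl) (simp add: ax)
    also have "\<dots> = (\<Sum>l<nn. s l * (\<Sum>p<nn. \<Sum>q<nn. \<Sum>r<nn. dd i p q * ss q r * mm p r l))"
      apply (simp only: sum_distrib_left sum_distrib_right sum.cartesian_product)
      apply (rule sum.reindex_bij_witness[where i="\<lambda>(l,p,q,r). (p,q,r,l)" and j="\<lambda>(p,q,r,l). (l,p,q,r)"])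
      by (auto simp: mult_ac)
    also have "\<dots> = (\<Sum>l<nn. s l * (ee i * uu l))"
      using True by (intro sum.cong refl) (simp add: ax_antiR)
    also have "\<dots> = ee i * ev s one"
      by (simp add: ev_def hone_def sum_distrib_left mult_ac)
    also have "\<dots> = eps i" using True gl_one[OF g] by (simp add: dual_one_def)
    finally show ?thesis .
  qed (simp add: conv_def dual_one_def)
qed

lemma finite_order: assumes g: "gl s" shows "\<exists>N>0. dpow H s N = eps"
proof -
  have "finite (range (dpow H s))" using dpow_gl[OF g] by (intro gl_finite) auto
  then have "\<not> inj (dpow H s)" using finite_imageD infinite_UNIV_nat by blast
  then obtain a b where ab: "a < b" "dpow H s a = dpow H s b"
    unfolding inj_def by (metis linorder_neqE_nat)
  define psi where "psi a = ((\<lambda>f. conv H f (phi s)) ^^ a) eps" for a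
  have psi_vecs: "psi a \<in> vecs nn" for a by (cases a) (simp_all add: psi_def eps_vecs conv_vecs)
  have inv: "conv H (dpow H s a) (psi a) = eps" for a
  proof (induction a)
    case 0 then show ?case by (simp add: dpow_0 psi_def conv_eps_left eps_vecs)
  next
    case (Suc a)
    have "conv H (dpow H s (Suc a)) (psi (Suc a)) = conv H s (conv H (conv H (dpow H s a) (psi a)) (phi s))"
      by (simp add: dpow_Suc psi_def conv_assoc)
    also have "\<dots> = eps" using Suc by (simp add: conv_eps_left phi_vecs conv_phi g)
    finally show ?case .
  qed
  have "eps = conv H (dpow H s b) (psi a)" using inv[of a] ab by simp
  also have "\<dots> = conv H (dpow H s (b - a)) (conv H (dpow H s a) (psi a))"
  proof -
    have "dpow H s b = conv H (dpow H s (b - a)) (dpow H s a)" using dpow_add[of s "b - a" a] ab by simp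
    then show ?thesis by (simp only: conv_assoc)
  qed
  also have "\<dots> = dpow H s (b - a)" by (simp add: inv conv_eps_right dpow_vecs)
  finally show ?thesis using ab by (intro exI[of _ "b - a"]) auto
qed

end


lemma lin_subspace_iff: "lin_subspace d W \<longleftrightarrow> W \<subseteq> vecs d \<and> fv.subspace W"
  by (auto simp: lin_subspace_def fv.subspace_def zero_fun_def plus_fun_def sc_def)

context hopf
begin

lemma mulv_zl[simp]: "mulv (\<lambda>a. 0) z = 0" by (simp add: mulv_def fun_eq_iff)
lemma mulv_zr[simp]: "mulv z (\<lambda>a. 0) = 0" by (simp add: mulv_def fun_eq_iff)

definition rreg :: "nat \<Rightarrow> nat \<Rightarrow> nat \<Rightarrow> 'k" where
  "rreg i a b = mm i b a"

lemma act_rreg: "i < nn \<Longrightarrow> act nn rreg i v = mulv (dl i) v"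
proof (rule ext)
  fix a assume i: "i < nn"
  show "act nn rreg i v a = mulv (dl i) v a"
  proof (cases "a < nn")
    case True
    have "mulv (dl i) v a = (\<Sum>x<nn. dl i x * (\<Sum>y<nn. v y * mm x y a))"
      using True by (simp add: mulv_def sum_distrib_left mult_ac)
    also have "\<dots> = (\<Sum>y<nn. v y * mm i y a)"
      using sum_ind3[OF i, of "\<lambda>x. (\<Sum>y<nn. v y * mm x y a)"] by (simp add: dl_def)
    finally show ?thesis using True by (simp add: act_def rreg_def mult.commute)
  qed (simp add: act_def mulv_def)
qed

lemma rreg_module: "is_module H nn rreg"
  unfolding is_module_def
proof (intro conjI allI impI)
  fix i j a b assume "i < nn" "j < nn" "a < nn" "b < nn"
  then show "(\<Sum>c<nn. rreg i a c * rreg j c b) = (\<Sum>r<nn. mm i j r * rreg r a b)"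
    using ax_assoc[of i j b a] by (simp add: rreg_def mult.commute)
next
  fix a b assume "a < nn" "b < nn"
  then show "(\<Sum>r<nn. uu r * rreg r a b) = kd a b"
    using ax_unitL[of b a] by (simp add: rreg_def kd_sym)
qed

definition lid :: "(nat \<Rightarrow> 'k) set \<Rightarrow> bool" where
  "lid W \<longleftrightarrow> W \<subseteq> vecs nn \<and> fv.subspace W \<and> (\<forall>h w. w \<in> W \<longrightarrow> mulv h w \<in> W)"

lemma mulv_expand: "h \<in> vecs nn \<Longrightarrow> mulv h w = (\<Sum>i<nn. sc (h i) (mulv (dl i) w))"
  by (subst vecs_expand[of h nn]) (simp_all add: mulv_sum_left mulv_sc_left)

lemma mulv_trunc: "mulv (\<lambda>i. if i < nn then h i else 0) w = mulv h w"
  by (auto simp: mulv_def fun_eq_iff intro!: sum.cong)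

lemma lid_submodule: "lid W \<Longrightarrow> submodule H nn rreg W"
  by (auto simp: lid_def submodule_def lin_subspace_iff invariant_def act_rreg)

lemma submodule_lid: assumes "submodule H nn rreg W" shows "lid W"
proof -
  have sub: "fv.subspace W" "W \<subseteq> vecs nn" using assms by (auto simp: submodule_def lin_subspace_iff)
  have inv: "\<And>i w. i < nn \<Longrightarrow> w \<in> W \<Longrightarrow> mulv (dl i) w \<in> W"
    using assms by (auto simp: submodule_def invariant_def act_rreg[symmetric])
  have "mulv h w \<in> W" if w: "w \<in> W" for h w
  proof -
    have "mulv h w = mulv (\<lambda>i. if i < nn then h i else 0) w" by (simp add: mulv_trunc)
    also have "\<dots> = (\<Sum>i<nn. sc ((\<lambda>i. if i < nn then h i else 0) i) (mulv (dl i) w))"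
      by (rule mulv_expand) (simp add: vecs_def)
    also have "\<dots> \<in> W"
      by (intro fv.subspace_sum[OF sub(1)] fv.subspace_scale[OF sub(1)] inv w) auto
    finally show ?thesis .
  qed
  then show ?thesis using sub by (auto simp: lid_def)
qed

lemma ss_inst: assumes "semisimple H" "is_module H d rho" "submodule H d rho W"
  shows "\<exists>W'. submodule H d rho W' \<and> W \<inter> W' = {\<lambda>_. 0} \<and>
              {(\<lambda>a. w a + w' a) | w w'. w \<in> W \<and> w' \<in> W'} = vecs d"
  using assms(1)[unfolded semisimple_def, rule_format, OF assms(2) assms(3)] .

lemma lid_compl:
  assumes ss: "semisimple H" and W: "lid W"
  obtains e e' W' where "e \<in> W" "lid W'" "e' \<in> W'" "W \<inter> W' = {0}" "one = e + e'"
proof -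
  obtain W' where W': "submodule H nn rreg W'" "W \<inter> W' = {\<lambda>_. 0}"
      "{(\<lambda>a. w a + w' a) | w w'. w \<in> W \<and> w' \<in> W'} = vecs nn"
    using ss_inst[OF ss rreg_module lid_submodule[OF W]] by blast
  have "one \<in> vecs nn" by (rule one_vecs)
  then have "one \<in> {(\<lambda>a. w a + w' a) | w w'. w \<in> W \<and> w' \<in> W'}" using W'(3) by simp
  then obtain e e' where ee: "e \<in> W" "e' \<in> W'" "one = (\<lambda>a. e a + e' a)" by blast
  have "one = e + e'" using ee(3) by (simp add: plus_fun_def)
  moreover have "W \<inter> W' = {0}" using W'(2) by (simp add: zero_fun_def)
  ultimately show ?thesis using that[of e W' e'] submodule_lid[OF W'(1)] ee(1,2) by blast
qed

lemma lid_mem_vecs: "lid W \<Longrightarrow> w \<in> W \<Longrightarrow> w \<in> vecs nn"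
  unfolding lid_def by blast

lemma ideal_unit:
  assumes ss: "semisimple H" and I: "lid I" and rI: "\<And>x h. x \<in> I \<Longrightarrow> mulv x h \<in> I"
  obtains e where "e \<in> I" "\<And>x. x \<in> I \<Longrightarrow> mulv x e = x" "\<And>x. x \<in> I \<Longrightarrow> mulv e x = x"
proof -
  obtain e e' W' where ew: "e \<in> I" "lid W'" "e' \<in> W'" "I \<inter> W' = {0}" "one = e + e'"
    by (rule lid_compl[OF ss I])
  have Isub: "fv.subspace I" using I by (simp add: lid_def)
  have xe': "mulv x e' = 0" if x: "x \<in> I" for x
  proof -
    have xv: "x \<in> vecs nn" using lid_mem_vecs[OF I x] .
    have "mulv x e' \<in> W'" using ew(2,3) by (simp add: lid_def)
    moreover have "mulv x e + mulv x e' = x"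
      using mulv_one_right[OF xv] ew(5) by (simp add: mulv_add_right)
    then have "mulv x e' = x - mulv x e" by (metis add_diff_cancel_left')
    then have "mulv x e' \<in> I" using fv.subspace_diff[OF Isub x rI[OF x]] by simp
    ultimately show ?thesis using ew(4) by blast
  qed
  have right: "mulv x e = x" if x: "x \<in> I" for x
  proof -
    have "x = mulv x one" using mulv_one_right[OF lid_mem_vecs[OF I x]] by simp
    also have "\<dots> = mulv x e" using xe'[OF x] ew(5) by (simp add: mulv_add_right)
    finally show ?thesis by simp
  qed
  have left0: "mulv e' x = 0" if x: "x \<in> I" for x
  proof -
    define y where "y = mulv e' x"
    have yI: "y \<in> I" using I x by (simp add: lid_def y_def)
    have yhy: "mulv (mulv y h) y = 0" for h
    proof -
      have "mulv (mulv y h) y = mulv e' (mulv (mulv (mulv x h) e') x)"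
        by (simp add: y_def mulv_assoc)
      also have "mulv (mulv x h) e' = 0" using xe'[OF rI[OF x]] .
      finally show ?thesis by (simp add: zero_fun_def)
    qed
    define L where "L = {mulv h y | h. True}"
    have L: "lid L"
      unfolding lid_def
    proof (intro conjI allI impI)
      show "L \<subseteq> vecs nn" by (auto simp: L_def mulv_vecs)
      show "fv.subspace L"
        unfolding fv.subspace_def L_def
      proof (intro conjI ballI allI)
        show "0 \<in> {mulv h y |h. True}" by (rule CollectI, rule exI[of _ 0]) simp
      next
        fix a b assume "a \<in> {mulv h y |h. True}" "b \<in> {mulv h y |h. True}"
        then obtain ha hb where "a = mulv ha y" "b = mulv hb y" by blast
        then show "a + b \<in> {mulv h y |h. True}" by (auto simp: mulv_add_left[symmetric])
      next
        fix c a assume "a \<in> {mulv h y |h. True}"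
        then obtain ha where "a = mulv ha y" by blast
        then show "sc c a \<in> {mulv h y |h. True}" by (auto simp: mulv_sc_left[symmetric])
      qed
      fix h w assume "w \<in> L"
      then obtain hw where "w = mulv hw y" by (auto simp: L_def)
      then show "mulv h w \<in> L" by (auto simp: L_def mulv_assoc[symmetric])
    qed
    obtain f f'' L'' where fl: "f \<in> L" "lid L''" "f'' \<in> L''" "L \<inter> L'' = {0}" "one = f + f''"
      by (rule lid_compl[OF ss L])
    obtain h0 where h0: "f = mulv h0 y" using fl(1) by (auto simp: L_def)
    have zf: "mulv z f = z" if z: "z \<in> L" for z
    proof -
      obtain hz where hz: "z = mulv hz y" using z by (auto simp: L_def)
      have zv: "z \<in> vecs nn" using z L by (auto simp: lid_def)
      have m1: "mulv z f'' \<in> L''" using fl(2,3) by (simp add: lid_def)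
      have m2: "mulv z f + mulv z f'' = z"
        using mulv_one_right[OF zv] fl(5) by (simp add: mulv_add_right)
      then have m3: "mulv z f'' = z - mulv z f" by (metis add_diff_cancel_left')
      have m4: "mulv z f \<in> L" by (auto simp: L_def h0 hz mulv_assoc[symmetric])
      have m5: "z - mulv z f \<in> L" using fv.subspace_diff[of L z, OF _ z m4] L by (simp add: lid_def)
      have "z - mulv z f \<in> L \<inter> L''" using m1 m3 m5 by simp
      then have "z - mulv z f = 0" using fl(4) by blast
      then have "mulv z f'' = 0" using m3 by simp
      then show ?thesis using m2 by simp
    qed
    have yhy': "mulv y (mulv h y) = 0" for h using yhy[of h] by (simp add: mulv_assoc)
    have "mulv f f = 0" by (simp add: h0 mulv_assoc yhy')
    then have f0: "f = 0" using zf[OF fl(1)] by simp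
    have yv: "y \<in> vecs nn" using lid_mem_vecs[OF I yI] .
    have "y \<in> L" unfolding L_def using mulv_one_left[OF yv] by (intro CollectI exI[of _ one]) simp
    then have "y = mulv y f" using zf by simp
    then show ?thesis using f0 by (simp add: y_def)
  qed
  show ?thesis
  proof (rule that[OF ew(1) right])
    fix x assume x: "x \<in> I"
    have "x = mulv one x" using mulv_one_left[OF lid_mem_vecs[OF I x]] by simp
    also have "\<dots> = mulv e x" using left0[OF x] ew(5) by (simp add: mulv_add_left)
    finally show "mulv e x = x" by simp
  qed
qed

end


context hopf
begin

lemma sum_lt_cong: "(\<And>x. x < n \<Longrightarrow> g x = h x) \<Longrightarrow> sum g {..<(n::nat)} = sum h {..<n}"
  by (rule sum.cong) auto

definition IG :: "(nat \<Rightarrow> 'k) set \<Rightarrow> (nat \<Rightarrow> 'k) set" where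
  "IG G = {x \<in> vecs nn. \<forall>g\<in>G. ev g x = 0}"

lemma IG_lid: assumes "G \<subseteq> {s. gl s}" shows "lid (IG G)"
  unfolding lid_def
proof (intro conjI allI impI)
  show "IG G \<subseteq> vecs nn" by (auto simp: IG_def)
  show "fv.subspace (IG G)"
    by (auto simp: fv.subspace_def IG_def ev_add_right ev_sc_right vecs_def)
  fix h w assume "w \<in> IG G"
  then show "mulv h w \<in> IG G" using assms by (auto simp: IG_def mulv_vecs gl_mulv)
qed

lemma IG_right: assumes "G \<subseteq> {s. gl s}" "x \<in> IG G" shows "mulv x h \<in> IG G"
  using assms by (auto simp: IG_def mulv_vecs gl_mulv)

lemma span_IG: assumes "G \<subseteq> {s. gl s}" "IG G = {0}" shows "fv.span G = vecs nn"
proof (rule span_of_sep)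
  show "G \<subseteq> vecs nn" using assms(1) gl_vecs by blast
  fix h assume "h \<in> vecs nn" "\<forall>g\<in>G. ev g h = 0"
  then have "h \<in> IG G" by (simp add: IG_def)
  then show "h = 0" using assms(2) by blast
qed

lemma range_dpow_gl: "gl s \<Longrightarrow> range (dpow H s) \<subseteq> {s. gl s}"
  using dpow_gl by blast

lemma faithful_span:
  assumes ss: "semisimple H" and g: "gl s"
    and fix1: "\<And>h. h \<in> vecs nn \<Longrightarrow> Tg s h = h \<Longrightarrow> \<exists>c. h = sc c one"
  shows "fv.span (range (dpow H s)) = vecs nn"
proof (rule span_IG[OF range_dpow_gl[OF g]], rule ccontr)
  let ?G = "range (dpow H s)"
  let ?I = "IG ?G"
  assume ne: "?I \<noteq> {0}"
  have sv: "s \<in> vecs nn" using gl_vecs[OF g] .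
  have Gg: "?G \<subseteq> {s. gl s}" using range_dpow_gl[OF g] .
  have I0: "0 \<in> ?I" using IG_lid[OF Gg] by (simp add: lid_def fv.subspace_0)
  obtain x0 where x0: "x0 \<in> ?I" "x0 \<noteq> 0" using ne I0 by blast
  obtain e where e: "e \<in> ?I" "\<And>x. x \<in> ?I \<Longrightarrow> mulv x e = x" "\<And>x. x \<in> ?I \<Longrightarrow> mulv e x = x"
    using ideal_unit[OF ss IG_lid[OF Gg] IG_right[OF Gg]] by metis
  obtain N where N: "N > 0" "dpow H s N = eps" using finite_order[OF g] by blast
  have TI: "Tg s x \<in> ?I" if x: "x \<in> ?I" for x
  proof -
    have "ev (dpow H s m) (Tg s x) = 0" for m
      using x by (simp add: ev_conv[symmetric] dpow_Suc'[OF sv, symmetric] IG_def)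
    then show ?thesis by (auto simp: IG_def Tg_vecs)
  qed
  let ?T' = "Tg (dpow H s (N - 1))"
  have T'I: "?T' x \<in> ?I" if x: "x \<in> ?I" for x
  proof -
    have "ev (dpow H s m) (?T' x) = 0" for m
      using x by (simp add: ev_conv[symmetric] dpow_add[symmetric] IG_def)
    then show ?thesis by (auto simp: IG_def Tg_vecs)
  qed
  have TT': "Tg s (?T' x) = x" if x: "x \<in> vecs nn" for x
  proof -
    have "conv H s (dpow H s (N - 1)) = dpow H s N"
      using N(1) by (simp add: dpow_Suc[symmetric])
    then show ?thesis using x N(2) by (simp add: Tg_comp Tg_eps)
  qed
  define f where "f = Tg s e"
  have fI: "f \<in> ?I" using TI[OF e(1)] by (simp add: f_def)
  have fl: "mulv f z = z" if z: "z \<in> ?I" for z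
  proof -
    have zv: "z \<in> vecs nn" using z by (simp add: IG_def)
    have "mulv f z = mulv (Tg s e) (Tg s (?T' z))" using TT'[OF zv] by (simp add: f_def)
    also have "\<dots> = Tg s (mulv e (?T' z))" by (simp add: Tg_mult[OF g])
    also have "\<dots> = Tg s (?T' z)" using e(3)[OF T'I[OF z]] by simp
    also have "\<dots> = z" using TT'[OF zv] .
    finally show ?thesis .
  qed
  have "f = mulv f e" using e(2)[OF fI] by simp
  also have "\<dots> = e" using fl[OF e(1)] .
  finally have "Tg s e = e" by (simp add: f_def)
  then obtain c where c: "e = sc c one" using fix1 e(1) by (auto simp: IG_def)
  have "ev (dpow H s 0) e = 0" using e(1) by (auto simp: IG_def)
  then have "ev eps e = 0" by (simp add: dpow_0)
  then have "c = 0" using c gl_one[OF eps_gl] by (simp add: ev_sc_right)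
  then have "e = 0" using c by (simp add: fun_eq_iff)
  then have "x0 = 0" using e(3)[OF x0(1)] by simp
  then show False using x0(2) by simp
qed

definition rho1 :: "(nat \<Rightarrow> 'k) \<Rightarrow> nat \<Rightarrow> nat \<Rightarrow> nat \<Rightarrow> 'k" where
  "rho1 s = (\<lambda>i a b. s i)"

lemma rho1_module: assumes g: "gl s" shows "is_module H 1 (rho1 s)"
  using g unfolding is_module_def grouplike_dual_def rho1_def by (simp add: kd_def)

lemma rho1_character: assumes g: "gl s" shows "character H 1 (rho1 s) = s"
  using gl_vecs[OF g] by (auto simp: character_def rho1_def fun_eq_iff vecs_def)

lemma rho1_irred: assumes g: "gl s" shows "irreducible_module H 1 (rho1 s)"
  unfolding irreducible_module_def
proof (intro conjI allI impI)
  show "is_module H 1 (rho1 s)" by (rule rho1_module[OF g])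
  show "0 < (1::nat)" by simp
  fix W assume W: "submodule H 1 (rho1 s) W"
  then have W1: "W \<subseteq> vecs 1" "fv.subspace W" by (auto simp: submodule_def lin_subspace_iff)
  show "W = {\<lambda>_. 0} \<or> W = vecs 1"
  proof (cases "\<exists>w\<in>W. w 0 \<noteq> 0")
    case True
    then obtain w where w: "w \<in> W" "w 0 \<noteq> 0" by blast
    have "vecs 1 \<subseteq> W"
    proof
      fix v :: "nat \<Rightarrow> 'k" assume v: "v \<in> vecs 1"
      have "v = sc (v 0 / w 0) w"
      proof (rule ext)
        fix a show "v a = sc (v 0 / w 0) w a"
          using v w W1(1) by (cases "a = 0") (auto simp: vecs_def)
      qed
      then show "v \<in> W" using fv.subspace_scale[OF W1(2) w(1), of "v 0 / w 0"] by metis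
    qed
    then show ?thesis using W1(1) by blast
  next
    case False
    have "W \<subseteq> {\<lambda>_. 0}"
    proof
      fix w assume w: "w \<in> W"
      have "w = (\<lambda>_. 0)"
      proof (rule ext)
        fix a show "w a = 0"
          using False w W1(1) by (cases "a = 0") (auto simp: vecs_def)
      qed
      then show "w \<in> {\<lambda>_. 0}" by simp
    qed
    moreover have "(\<lambda>_. 0) \<in> W" using fv.subspace_0[OF W1(2)] by (simp add: zero_fun_def)
    ultimately show ?thesis by blast
  qed
qed

definition sig :: "(nat \<Rightarrow> nat \<Rightarrow> nat \<Rightarrow> 'k) \<Rightarrow> nat \<Rightarrow> 'k" where
  "sig rho = (\<lambda>i. if i < nn then rho i 0 0 else 0)"

lemma sig_gl: assumes m: "is_module H 1 rho" shows "gl (sig rho)"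
proof -
  have a: "(\<Sum>c<1. rho i 0 c * rho j c 0) = (\<Sum>r<nn. mm i j r * rho r 0 0)" if "i<nn" "j<nn" for i j
    using m that unfolding is_module_def by blast
  have u: "(\<Sum>r<nn. uu r * rho r 0 0) = kd 0 0" using m unfolding is_module_def by blast
  have a': "(\<Sum>r<nn. mm i j r * rho r 0 0) = rho i 0 0 * rho j 0 0" if "i<nn" "j<nn" for i j
    using a[OF that] by simp
  show ?thesis
    unfolding grouplike_dual_def sig_def
    using a' u by (auto simp: vecs_def kd_def cong: sum_lt_cong)
qed

lemma Tg_sig: "p < nn \<Longrightarrow> Tg (sig rho) h p = (\<Sum>i<nn. h i * (\<Sum>q<nn. dd i p q * rho q 0 0))"
  by (simp add: Tg_def sig_def cong: sum_lt_cong)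

lemma LKer1: "LKer H 1 rho = {h \<in> vecs nn. Tg (sig rho) h = h}"
proof -
  have eq: "(\<Sum>i<nn. h i * (\<Sum>q<nn. dd i p q * (\<Sum>b<1. rho q a b * v b))) = Tg (sig rho) h p * v 0"
    if "p < nn" "a < 1" for h v p a
    using that by (simp add: Tg_sig sum_distrib_left sum_distrib_right mult_ac)
  show ?thesis
  proof (intro set_eqI iffI)
    fix h assume h: "h \<in> LKer H 1 rho"
    then have hv: "h \<in> vecs nn" by (simp add: LKer_def)
    have "Tg (sig rho) h p = h p" if p: "p < nn" for p
    proof -
      have "dl 0 \<in> vecs 1" by (simp add: dl_vecs)
      then have "(\<Sum>i<nn. h i * (\<Sum>q<nn. dd i p q * (\<Sum>b<1. rho q 0 b * dl 0 b))) = h p * dl 0 0"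
        using h p unfolding LKer_def by blast
      then show ?thesis using eq[OF p, of 0 h "dl 0"] by (simp add: dl_def)
    qed
    then have "Tg (sig rho) h = h" using hv by (auto simp: fun_eq_iff Tg_def vecs_def)
    then show "h \<in> {h \<in> vecs nn. Tg (sig rho) h = h}" using hv by simp
  next
    fix h assume "h \<in> {h \<in> vecs nn. Tg (sig rho) h = h}"
    then have hv: "h \<in> vecs nn" and T: "Tg (sig rho) h = h" by auto
    show "h \<in> LKer H 1 rho"
      unfolding LKer_def using hv eq T by (auto simp: vecs_def)
  qed
qed

lemma sig_rho1: "gl s \<Longrightarrow> sig (rho1 s) = s"
  using gl_vecs by (auto simp: sig_def rho1_def fun_eq_iff vecs_def)

lemma dpow_fixed: assumes g: "gl s" and h: "Tg s h = h" shows "ev (dpow H s m) h = ev eps h"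
proof (induction m)
  case 0 then show ?case by (simp add: dpow_0)
next
  case (Suc m)
  have "ev (dpow H s (Suc m)) h = ev (dpow H s m) (Tg s h)"
    by (simp add: dpow_Suc'[OF gl_vecs[OF g]] ev_conv)
  then show ?case using h Suc by simp
qed

lemma span_faithful:
  assumes g: "gl s" and sp: "fv.span (range (dpow H s)) = vecs nn"
  shows "faithful_char H 1 (rho1 s)"
  unfolding faithful_char_def LKer1 sig_rho1[OF g]
proof (intro set_eqI iffI)
  fix h assume "h \<in> {h \<in> vecs nn. Tg s h = h}"
  then have hv: "h \<in> vecs nn" and T: "Tg s h = h" by auto
  have evf: "ev f h = ev eps h * ev f one" if f: "f \<in> fv.span (range (dpow H s))" for f
  proof -
    from f obtain t r where t: "finite t" "t \<subseteq> range (dpow H s)" "f = (\<Sum>a\<in>t. sc (r a) a)"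
      unfolding fv.span_explicit by blast
    have "\<And>a. a \<in> t \<Longrightarrow> ev a h = ev eps h \<and> ev a one = 1"
      using t(2) dpow_fixed[OF g T] gl_one[OF dpow_gl[OF g]] by auto
    then show ?thesis using t(3)
      by (simp add: ev_sum_left ev_sc_left sum_distrib_left sum_distrib_right mult_ac cong: sum.cong)
  qed
  have hh: "h = (\<lambda>l. ev eps h * one l)"
  proof (rule ext)
    fix p show "h p = ev eps h * one p"
    proof (cases "p < nn")
      case True
      have "dl p \<in> fv.span (range (dpow H s))" using sp dl_vecs[OF True] by simp
      then show ?thesis using evf[of "dl p"] True by (simp add: ev_dl_left)
    qed (use hv in \<open>simp add: vecs_def hone_def\<close>)
  qed
  show "h \<in> {\<lambda>l. c * one l |c. True}"
    by (rule CollectI, rule exI[of _ "ev eps h"]) (use hh in simp)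
next
  fix h assume "h \<in> {\<lambda>l. c * one l |c. True}"
  then obtain c where c: "h = sc c one" by (auto simp: sc_def)
  have "Tg s h = h" using c by (simp add: Tg_sc Tg_one[OF g])
  moreover have "h \<in> vecs nn" using c by (simp add: vecs_sc one_vecs)
  ultimately show "h \<in> {h \<in> vecs nn. Tg s h = h}" by simp
qed

lemma faithful_to_span:
  assumes ss: "semisimple H" and m: "is_module H 1 rho" and f: "faithful_char H 1 rho"
  shows "gl (sig rho) \<and> fv.span (range (dpow H (sig rho))) = vecs nn"
proof -
  have g: "gl (sig rho)" by (rule sig_gl[OF m])
  have "\<exists>c. h = sc c one" if "h \<in> vecs nn" "Tg (sig rho) h = h" for h
  proof -
    have "h \<in> LKer H 1 rho" unfolding LKer1 using that by simp
    then have "h \<in> {\<lambda>l. c * one l | c. True}" using f by (simp add: faithful_char_def)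
    then obtain c where "h = (\<lambda>l. c * one l)" by blast
    then show ?thesis by (intro exI[of _ c]) (simp add: sc_def)
  qed
  then show ?thesis using faithful_span[OF ss g] g by blast
qed

lemma lin_span_mono: "X \<subseteq> Y \<Longrightarrow> lin_span X \<subseteq> lin_span Y"
  by (simp add: lin_span_eq fv.span_mono)

lemma span_RH:
  assumes g: "gl s" and sp: "fv.span (range (dpow H s)) = vecs nn"
  shows "RH H = lin_span (range (dpow H s))"
proof -
  let ?C = "{character H d rho | d rho. irreducible_module H d rho}"
  have C: "?C \<subseteq> vecs nn" by (auto simp: character_def vecs_def)
  have "range (dpow H s) \<subseteq> ?C"
  proof
    fix x assume "x \<in> range (dpow H s)"
    then obtain m where x: "x = dpow H s m" by blast
    have gm: "gl x" using dpow_gl[OF g] x by simp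
    show "x \<in> ?C"
      apply (rule CollectI, rule exI[of _ 1], rule exI[of _ "rho1 x"])
      apply (rule conjI)
       apply (rule sym, rule rho1_character[OF gm])
      apply (rule rho1_irred[OF gm])
      done
  qed
  then have "lin_span (range (dpow H s)) \<subseteq> RH H" unfolding RH_def by (rule lin_span_mono)
  moreover have "RH H \<subseteq> vecs nn"
    unfolding RH_def lin_span_eq using C by (intro fv.span_minimal vecs_subspace)
  ultimately show ?thesis using sp by (simp add: lin_span_eq)
qed

end


lemma act_vecs: "act d rho i v \<in> vecs d" by (simp add: act_def vecs_def)

lemma act_add: "act d rho i (v + w) = act d rho i v + act d rho i w"
  by (auto simp: act_def fun_eq_iff algebra_simps sum.distrib)

lemma act_sc: "act d rho i (sc c v) = sc c (act d rho i v)"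
  by (auto simp: act_def fun_eq_iff sum_distrib_left mult_ac)

lemma act_sum: "act d rho i (\<Sum>x\<in>A. f x) = (\<Sum>x\<in>A. act d rho i (f x))"
proof (rule ext)
  fix a show "act d rho i (\<Sum>x\<in>A. f x) a = (\<Sum>x\<in>A. act d rho i (f x)) a"
  proof (cases "a < d")
    case True
    have "act d rho i (\<Sum>x\<in>A. f x) a = (\<Sum>b<d. \<Sum>x\<in>A. rho i a b * f x b)"
      using True by (simp add: act_def fun_sum_apply sum_distrib_left)
    also have "\<dots> = (\<Sum>x\<in>A. \<Sum>b<d. rho i a b * f x b)" by (rule sum.swap)
    also have "\<dots> = (\<Sum>x\<in>A. act d rho i (f x)) a" using True by (simp add: act_def fun_sum_apply)
    finally show ?thesis .
  qed (simp add: act_def fun_sum_apply)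
qed

lemma gsum_ind: "l < (n::nat) \<Longrightarrow> (\<Sum>j<n. x j * (if j = l then 1 else 0)) = (x l :: 'a::comm_ring_1)"
proof -
  assume l: "l < n"
  have "(\<Sum>j<n. x j * (if j = l then 1 else 0)) = (\<Sum>j<n. if j = l then x j else 0)"
    by (intro sum.cong) auto
  also have "\<dots> = x l" using l by (subst sum.delta) auto
  finally show ?thesis .
qed

lemma act_dl: "a < d \<Longrightarrow> b < d \<Longrightarrow> act d rho i (dl b) a = rho i a b"
  by (simp add: act_def dl_def gsum_ind)

context hopf
begin

lemma mod_op: assumes m: "is_module H d rho" and ij: "i < nn" "j < nn"
  shows "act d rho i (act d rho j v) = (\<Sum>r<nn. sc (mm i j r) (act d rho r v))"
proof (rule ext)
  fix a
  have ax: "\<And>a b. a < d \<Longrightarrow> b < d \<Longrightarrow> (\<Sum>c<d. rho i a c * rho j c b) = (\<Sum>r<nn. mm i j r * rho r a b)"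
    using m ij unfolding is_module_def by blast
  show "act d rho i (act d rho j v) a = (\<Sum>r<nn. sc (mm i j r) (act d rho r v)) a"
  proof (cases "a < d")
    case True
    have "act d rho i (act d rho j v) a = (\<Sum>c<d. rho i a c * (\<Sum>b<d. rho j c b * v b))"
      using True by (simp add: act_def cong: sum_lt_cong)
    also have "\<dots> = (\<Sum>b<d. (\<Sum>c<d. rho i a c * rho j c b) * v b)"
      by (simp add: sum_distrib_left sum_distrib_right mult_ac) (rule sum.swap)
    also have "\<dots> = (\<Sum>b<d. (\<Sum>r<nn. mm i j r * rho r a b) * v b)"
      using True by (intro sum_lt_cong) (simp add: ax)
    also have "\<dots> = (\<Sum>r<nn. mm i j r * (\<Sum>b<d. rho r a b * v b))"
      by (simp add: sum_distrib_left sum_distrib_right mult_ac) (rule sum.swap)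
    also have "\<dots> = (\<Sum>r<nn. sc (mm i j r) (act d rho r v)) a"
      using True by (simp add: fun_sum_apply act_def)
    finally show ?thesis .
  qed (simp add: act_def fun_sum_apply)
qed

lemma mod_unit: assumes m: "is_module H d rho" and v: "v \<in> vecs d"
  shows "(\<Sum>r<nn. sc (uu r) (act d rho r v)) = v"
proof (rule ext)
  fix a
  have ax: "\<And>a b. a < d \<Longrightarrow> b < d \<Longrightarrow> (\<Sum>r<nn. uu r * rho r a b) = kd a b"
    using m unfolding is_module_def by blast
  show "(\<Sum>r<nn. sc (uu r) (act d rho r v)) a = v a"
  proof (cases "a < d")
    case True
    have "(\<Sum>r<nn. sc (uu r) (act d rho r v)) a = (\<Sum>b<d. (\<Sum>r<nn. uu r * rho r a b) * v b)"
      using True by (simp add: fun_sum_apply act_def sum_distrib_left sum_distrib_right mult_ac)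
         (rule sum.swap)
    also have "\<dots> = (\<Sum>b<d. kd a b * v b)"
      using True by (intro sum_lt_cong) (simp add: ax)
    also have "\<dots> = v a" using True sum_ind3[OF True, of v] by (simp add: kd_def eq_commute[of a])
    finally show ?thesis .
  qed (use v in \<open>simp add: act_def fun_sum_apply vecs_def\<close>)
qed

lemma mod_from_op:
  assumes op: "\<And>i j v. i < nn \<Longrightarrow> j < nn \<Longrightarrow> v \<in> vecs d \<Longrightarrow>
                  act d rho i (act d rho j v) = (\<Sum>r<nn. sc (mm i j r) (act d rho r v))"
    and un: "\<And>v. v \<in> vecs d \<Longrightarrow> (\<Sum>r<nn. sc (uu r) (act d rho r v)) = v"
  shows "is_module H d rho"
  unfolding is_module_def
proof (intro conjI allI impI)
  fix i j a b assume i: "i < nn" and j: "j < nn" and a: "a < d" and b: "b < d"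
  have "act d rho i (act d rho j (dl b)) a = (\<Sum>c<d. rho i a c * act d rho j (dl b) c)"
    using a by (simp add: act_def[of d rho i])
  also have "\<dots> = (\<Sum>c<d. rho i a c * rho j c b)"
    using b by (intro sum_lt_cong) (simp add: act_dl)
  finally have "act d rho i (act d rho j (dl b)) a = (\<Sum>c<d. rho i a c * rho j c b)" .
  moreover have "(\<Sum>r<nn. sc (mm i j r) (act d rho r (dl b))) a = (\<Sum>r<nn. mm i j r * rho r a b)"
    using a b by (simp add: fun_sum_apply act_dl)
  ultimately show "(\<Sum>c<d. rho i a c * rho j c b) = (\<Sum>r<nn. mm i j r * rho r a b)"
    using op[OF i j dl_vecs[OF b]] by simp
next
  fix a b assume a: "a < d" and b: "b < d"
  have "(\<Sum>r<nn. sc (uu r) (act d rho r (dl b))) a = (\<Sum>r<nn. uu r * rho r a b)"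
    using a b by (simp add: fun_sum_apply act_dl)
  then show "(\<Sum>r<nn. uu r * rho r a b) = kd a b"
    using un[OF dl_vecs[OF b]] by (simp add: dl_def kd_def)
qed

lemma transport:
  assumes m: "is_module H d rho" and Wsub: "W \<subseteq> vecs d" and Wsp: "fv.subspace W"
    and inv: "\<And>i w. i < nn \<Longrightarrow> w \<in> W \<Longrightarrow> act d rho i w \<in> W"
    and BW: "B \<subseteq> W" and Bind: "fv.independent B" and WB: "W \<subseteq> fv.span B" and fB: "finite B"
    and eid: "\<And>w. w \<in> W \<Longrightarrow> (\<Sum>i<nn. sc (e i) (act d rho i w)) = w"
  shows "\<exists>rho'. is_module H (card B) rho' \<and>
           (\<forall>v\<in>vecs (card B). (\<Sum>i<nn. sc (e i) (act (card B) rho' i v)) = v)"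
proof -
  define r where "r = card B"
  obtain \<beta> where \<beta>: "bij_betw \<beta> {..<r} B"
    using ex_bij_betw_nat_finite[OF fB] unfolding r_def atLeast0LessThan by blast
  have \<beta>B: "\<And>a. a < r \<Longrightarrow> \<beta> a \<in> B" using \<beta> by (auto simp: bij_betw_def)
  have \<beta>inj: "\<And>a b. a < r \<Longrightarrow> b < r \<Longrightarrow> \<beta> a = \<beta> b \<Longrightarrow> a = b"
    using \<beta> by (auto simp: bij_betw_def inj_on_def)
  have spB: "fv.span B = W"
    using WB fv.span_minimal[OF BW Wsp] by blast
  define R where "R = fv.representation B"
  define emb where "emb v = (\<Sum>b<r. sc (v b) (\<beta> b))" for v :: "nat \<Rightarrow> 'k"
  define coord where "coord w = (\<lambda>a. if a < r then R w (\<beta> a) else 0)" for w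
  have embW: "emb v \<in> W" for v
    unfolding emb_def using \<beta>B BW
    by (intro fv.subspace_sum[OF Wsp] fv.subspace_scale[OF Wsp]) auto
  have embv: "emb v \<in> vecs d" for v using embW Wsub by blast
  have E2: "emb (coord w) = w" if w: "w \<in> W" for w
  proof -
    have "emb (coord w) = (\<Sum>a<r. sc (R w (\<beta> a)) (\<beta> a))"
      by (simp add: emb_def coord_def)
    also have "\<dots> = (\<Sum>b\<in>B. sc (R w b) b)"
      using sum.reindex_bij_betw[OF \<beta>, of "\<lambda>b. sc (R w b) b"] by simp
    also have "\<dots> = w"
      unfolding R_def using w spB by (intro fv.sum_representation_eq[OF Bind _ fB]) auto
    finally show ?thesis .
  qed
  have Rb: "R (\<beta> b) = (\<lambda>x. if x = \<beta> b then 1 else 0)" if "b < r" for b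
    unfolding R_def using fv.representation_basis[OF Bind \<beta>B[OF that]] .
  have E3: "coord (emb v) = v" if v: "v \<in> vecs r" for v
  proof (rule ext)
    fix a show "coord (emb v) a = v a"
    proof (cases "a < r")
      case True
      have "R (emb v) = (\<lambda>x. \<Sum>b<r. R (sc (v b) (\<beta> b)) x)"
        unfolding emb_def R_def using \<beta>B by (intro fv.representation_sum[OF Bind]) (auto intro: fv.span_scale fv.span_base)
      also have "\<dots> = (\<lambda>x. \<Sum>b<r. v b * R (\<beta> b) x)"
        unfolding R_def
      proof (intro ext sum_lt_cong)
        fix x b assume "b < r"
        then show "fv.representation B (sc (v b) (\<beta> b)) x = v b * fv.representation B (\<beta> b) x"
          using fv.representation_scale[OF Bind fv.span_base[OF \<beta>B]] by simp
      qed
      finally have "R (emb v) (\<beta> a) = (\<Sum>b<r. v b * (if \<beta> a = \<beta> b then 1 else 0))"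
        by (simp add: Rb cong: sum_lt_cong)
      also have "\<dots> = (\<Sum>b<r. v b * (if b = a then 1 else 0))"
        using True \<beta>inj by (intro sum_lt_cong) auto
      also have "\<dots> = v a" using gsum_ind[OF True] .
      finally show ?thesis using True by (simp add: coord_def)
    qed (use v in \<open>simp add: coord_def vecs_def\<close>)
  qed
  have Cadd: "coord (w1 + w2) = coord w1 + coord w2" if "w1 \<in> W" "w2 \<in> W" for w1 w2
    using that spB by (auto simp: coord_def R_def fun_eq_iff fv.representation_add[OF Bind])
  have Csc: "coord (sc c w) = sc c (coord w)" if "w \<in> W" for c w
    using that spB by (auto simp: coord_def R_def fun_eq_iff fv.representation_scale[OF Bind])
  have C0: "coord 0 = 0"
    by (auto simp: coord_def R_def fun_eq_iff fv.representation_zero)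
  have C0': "coord (\<lambda>a. 0) = (\<lambda>a. 0)"
    using C0 by (simp add: zero_fun_def)
  have Clin: "coord (\<Sum>x\<in>A. sc (c x) (f x)) = (\<Sum>x\<in>A. sc (c x) (coord (f x)))"
    if "\<And>x. x \<in> A \<Longrightarrow> f x \<in> W" for A c f
    using that
  proof (induction A rule: infinite_finite_induct)
    case (infinite A) then show ?case by (simp add: C0 C0')
  next
    case empty then show ?case by (simp add: C0 C0')
  next
    case (insert x F)
    have s: "(\<Sum>y\<in>F. sc (c y) (f y)) \<in> W" using insert
      by (intro fv.subspace_sum[OF Wsp] fv.subspace_scale[OF Wsp]) auto
    have IH: "coord (\<Sum>y\<in>F. sc (c y) (f y)) = (\<Sum>y\<in>F. sc (c y) (coord (f y)))"
      by (rule insert.IH) (use insert(4) in blast)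
    have fx: "f x \<in> W" using insert(4) by blast
    have "coord (\<Sum>y\<in>insert x F. sc (c y) (f y)) = coord (sc (c x) (f x) + (\<Sum>y\<in>F. sc (c y) (f y)))"
      by (simp only: sum.insert[OF insert(1,2)])
    also have "\<dots> = coord (sc (c x) (f x)) + coord (\<Sum>y\<in>F. sc (c y) (f y))"
      by (rule Cadd[OF fv.subspace_scale[OF Wsp fx] s])
    also have "\<dots> = sc (c x) (coord (f x)) + (\<Sum>y\<in>F. sc (c y) (coord (f y)))"
      by (simp only: Csc[OF fx] IH)
    also have "\<dots> = (\<Sum>y\<in>insert x F. sc (c y) (coord (f y)))"
      by (simp only: sum.insert[OF insert(1,2)])
    finally show ?case .
  qed
  define rho' where "rho' i a b = coord (act d rho i (\<beta> b)) a" for i a b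
  have E5: "act r rho' i v = coord (act d rho i (emb v))" if v: "v \<in> vecs r" and i: "i < nn" for i v
  proof -
    have actW: "\<And>b. b < r \<Longrightarrow> act d rho i (\<beta> b) \<in> W" using inv[OF i] \<beta>B BW by blast
    have "coord (act d rho i (emb v)) = coord (\<Sum>b<r. sc (v b) (act d rho i (\<beta> b)))"
      by (simp add: emb_def act_sum act_sc)
    also have "\<dots> = (\<Sum>b<r. sc (v b) (coord (act d rho i (\<beta> b))))"
      using actW by (intro Clin) auto
    finally have eq: "coord (act d rho i (emb v)) = (\<Sum>b<r. sc (v b) (coord (act d rho i (\<beta> b))))" .
    show ?thesis
    proof (rule ext)
      fix a show "act r rho' i v a = coord (act d rho i (emb v)) a"
        unfolding eq by (cases "a < r") (auto simp: act_def rho'_def fun_sum_apply coord_def mult.commute)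
    qed
  qed
  have actW': "act d rho i (emb v) \<in> W" if "i < nn" for i v using inv[OF that embW] .
  have op: "act r rho' i (act r rho' j v) = (\<Sum>k<nn. sc (mm i j k) (act r rho' k v))"
    if i: "i < nn" and j: "j < nn" and v: "v \<in> vecs r" for i j v
  proof -
    have jv: "act r rho' j v = coord (act d rho j (emb v))" using E5[OF v j] .
    have "act r rho' i (act r rho' j v) = coord (act d rho i (emb (act r rho' j v)))"
      by (rule E5[OF act_vecs i])
    also have "\<dots> = coord (act d rho i (emb (coord (act d rho j (emb v)))))"
      by (simp only: jv)
    also have "\<dots> = coord (act d rho i (act d rho j (emb v)))"
      using E2[OF actW'[OF j]] by simp
    also have "\<dots> = coord (\<Sum>k<nn. sc (mm i j k) (act d rho k (emb v)))"
      by (simp add: mod_op[OF m i j])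
    also have "\<dots> = (\<Sum>k<nn. sc (mm i j k) (coord (act d rho k (emb v))))"
      using actW' by (intro Clin) auto
    also have "\<dots> = (\<Sum>k<nn. sc (mm i j k) (act r rho' k v))"
      using E5[OF v] by simp
    finally show ?thesis .
  qed
  have lin_e: "(\<Sum>k<nn. sc (c k) (act r rho' k v)) = coord (\<Sum>k<nn. sc (c k) (act d rho k (emb v)))"
    if v: "v \<in> vecs r" for c v
  proof -
    have "(\<Sum>k<nn. sc (c k) (act r rho' k v)) = (\<Sum>k<nn. sc (c k) (coord (act d rho k (emb v))))"
      using E5[OF v] by simp
    also have "\<dots> = coord (\<Sum>k<nn. sc (c k) (act d rho k (emb v)))"
      using actW' by (intro Clin[symmetric]) auto
    finally show ?thesis .
  qed
  have un: "(\<Sum>k<nn. sc (uu k) (act r rho' k v)) = v" if v: "v \<in> vecs r" for v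
    using lin_e[OF v, of uu] mod_unit[OF m embv] E3[OF v] by simp
  have ei: "(\<Sum>k<nn. sc (e k) (act r rho' k v)) = v" if v: "v \<in> vecs r" for v
    using lin_e[OF v, of e] eid[OF embW] E3[OF v] by simp
  have "is_module H r rho'" by (rule mod_from_op[OF op un])
  then show ?thesis using ei unfolding r_def by blast
qed

lemma basis_of:
  fixes W :: "(nat \<Rightarrow> 'k) set"
  assumes "W \<subseteq> vecs d"
  obtains B where "B \<subseteq> W" "fv.independent B" "W \<subseteq> fv.span B" "finite B" "card B \<le> d"
proof -
  obtain B where B: "B \<subseteq> W" "fv.independent B" "W \<subseteq> fv.span B"
    using fv.maximal_independent_subset[of W] by blast
  have "B \<subseteq> fv.span (dl ` {..<d})" using B(1) assms vecs_span by blast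
  then have "finite B \<and> card B \<le> card (dl ` {..<d} :: (nat \<Rightarrow> 'k) set)"
    using fv.independent_span_bound[OF _ B(2), of "dl ` {..<d}"] by simp
  then show ?thesis using that B card_dl[of d, where 'a='k] by auto
qed

lemma irr_exists:
  assumes "is_module H d rho" "d > 0" "\<And>v. v \<in> vecs d \<Longrightarrow> (\<Sum>i<nn. sc (e i) (act d rho i v)) = v"
  shows "\<exists>d' rho'. irreducible_module H d' rho' \<and>
           (\<forall>v\<in>vecs d'. (\<Sum>i<nn. sc (e i) (act d' rho' i v)) = v)"
  using assms
proof (induction d arbitrary: rho rule: less_induct)
  case (less d)
  show ?case
  proof (cases "irreducible_module H d rho")
    case True then show ?thesis using less.prems(3) by blast
  next
    case False
    then obtain W where W: "submodule H d rho W" "W \<noteq> {\<lambda>_. 0}" "W \<noteq> vecs d"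
      using less.prems(1,2) unfolding irreducible_module_def by blast
    have Wsub: "W \<subseteq> vecs d" and Wsp: "fv.subspace W"
      using W(1) by (auto simp: submodule_def lin_subspace_iff)
    have inv: "\<And>i w. i < hdim H \<Longrightarrow> w \<in> W \<Longrightarrow> act d rho i w \<in> W"
      using W(1) by (auto simp: submodule_def invariant_def)
    obtain B where B: "B \<subseteq> W" "fv.independent B" "W \<subseteq> fv.span B" "finite B" "card B \<le> d"
      using basis_of[OF Wsub] by blast
    have "card B \<noteq> d"
    proof
      assume c: "card B = d"
      have "B \<subseteq> fv.span (dl ` {..<d})" using B(1) Wsub vecs_span by blast
      then have "fv.span (dl ` {..<d}) \<subseteq> fv.span B"
        using indep_spans[OF B(2), of "dl ` {..<d}"] card_dl[of d, where 'a='k] c by simp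
      then have "vecs d \<subseteq> W" using vecs_span fv.span_minimal[OF B(1) Wsp] by blast
      then show False using W(3) Wsub by blast
    qed
    then have lt: "card B < d" using B(5) by simp
    have "card B \<noteq> 0"
    proof
      assume "card B = 0"
      then have "B = {}" using B(4) by simp
      then have "W \<subseteq> {0}" using B(3) by simp
      moreover have "0 \<in> W" using fv.subspace_0[OF Wsp] .
      ultimately have "W = {\<lambda>_. 0}" by (auto simp: zero_fun_def)
      then show False using W(2) by simp
    qed
    then have pos: "card B > 0" by simp
    obtain rho' where rho': "is_module H (card B) rho'"
      "\<forall>v\<in>vecs (card B). (\<Sum>i<nn. sc (e i) (act (card B) rho' i v)) = v"
      using transport[OF less.prems(1) Wsub Wsp inv B(1-4)] less.prems(3) Wsub by blast
    show ?thesis using less.IH[OF lt rho'(1) pos] rho'(2) by blast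
  qed
qed

lemma RH_to_span:
  assumes ss: "semisimple H" and g: "gl s" and R: "RH H = lin_span (range (dpow H s))"
  shows "fv.span (range (dpow H s)) = vecs nn"
proof (rule span_IG[OF range_dpow_gl[OF g]], rule ccontr)
  let ?G = "range (dpow H s)"
  let ?I = "IG ?G"
  assume ne: "?I \<noteq> {0}"
  have Gg: "?G \<subseteq> {s. gl s}" using range_dpow_gl[OF g] .
  have Ilid: "lid ?I" using IG_lid[OF Gg] .
  obtain e where e: "e \<in> ?I" "\<And>x. x \<in> ?I \<Longrightarrow> mulv x e = x" "\<And>x. x \<in> ?I \<Longrightarrow> mulv e x = x"
    using ideal_unit[OF ss IG_lid[OF Gg] IG_right[OF Gg]] by metis
  have ev_: "e \<in> vecs nn" using e(1) by (simp add: IG_def)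
  have Isub: "?I \<subseteq> vecs nn" and Isp: "fv.subspace ?I" using Ilid by (auto simp: lid_def)
  have inv: "\<And>i w. i < nn \<Longrightarrow> w \<in> ?I \<Longrightarrow> act nn rreg i w \<in> ?I"
    using Ilid by (simp add: act_rreg lid_def)
  obtain B where B: "B \<subseteq> ?I" "fv.independent B" "?I \<subseteq> fv.span B" "finite B" "card B \<le> nn"
    using basis_of[OF Isub] by blast
  have "card B \<noteq> 0"
  proof
    assume "card B = 0"
    then have "B = {}" using B(4) by simp
    then have "?I \<subseteq> {0}" using B(3) by simp
    moreover have "0 \<in> ?I" using fv.subspace_0[OF Isp] .
    ultimately show False using ne by blast
  qed
  then have pos: "card B > 0" by simp
  have eid: "(\<Sum>i<nn. sc (e i) (act nn rreg i w)) = w" if w: "w \<in> ?I" for w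
  proof -
    have "(\<Sum>i<nn. sc (e i) (act nn rreg i w)) = (\<Sum>i<nn. sc (e i) (mulv (dl i) w))"
      by (intro sum_lt_cong) (simp add: act_rreg)
    also have "\<dots> = mulv e w" using mulv_expand[OF ev_] by simp
    also have "\<dots> = w" using e(3)[OF w] .
    finally show ?thesis .
  qed
  obtain rho' where rho': "is_module H (card B) rho'"
      "\<forall>v\<in>vecs (card B). (\<Sum>i<nn. sc (e i) (act (card B) rho' i v)) = v"
    using transport[OF rreg_module Isub Isp inv B(1-4) eid] by blast
  obtain d2 rho2 where r2: "irreducible_module H d2 rho2"
      "\<And>v. v \<in> vecs d2 \<Longrightarrow> (\<Sum>i<nn. sc (e i) (act d2 rho2 i v)) = v"
    using irr_exists[OF rho'(1) pos] rho'(2) by blast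
  have d2: "d2 > 0" using r2(1) unfolding irreducible_module_def by blast
  let ?chi = "character H d2 rho2"
  have "?chi \<in> {character H d rho | d rho. irreducible_module H d rho}"
    by (rule CollectI, rule exI[of _ d2], rule exI[of _ rho2]) (simp add: r2(1))
  then have "?chi \<in> RH H" unfolding RH_def lin_span_eq by (rule fv.span_base)
  then have "?chi \<in> fv.span ?G" using R by (simp add: lin_span_eq)
  moreover have "\<And>b. b \<in> ?G \<Longrightarrow> ev b e = 0" using e(1) unfolding IG_def by blast
  ultimately have z: "ev ?chi e = 0" by (rule ev_span_zero)
  have diag: "(\<Sum>i<nn. e i * rho2 i a a) = 1" if a: "a < d2" for a
  proof -
    have "(\<Sum>i<nn. sc (e i) (act d2 rho2 i (dl a))) a = dl a a" using r2(2)[OF dl_vecs[OF a]] by simp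
    moreover have "dl a a = (1::'k)" by (simp add: dl_def)
    moreover have "(\<Sum>i<nn. sc (e i) (act d2 rho2 i (dl a))) a = (\<Sum>i<nn. e i * rho2 i a a)"
      using a by (simp add: fun_sum_apply act_dl)
    ultimately show ?thesis by simp
  qed
  have "ev ?chi e = (\<Sum>i<nn. (\<Sum>a<d2. rho2 i a a) * e i)"
    by (simp add: ev_def character_def)
  also have "\<dots> = (\<Sum>a<d2. \<Sum>i<nn. e i * rho2 i a a)"
    by (simp add: sum_distrib_left mult_ac) (rule sum.swap)
  also have "\<dots> = of_nat d2" using diag by (simp cong: sum_lt_cong)
  finally have "(of_nat d2 :: 'k) = 0" using z by simp
  then show False using d2 by simp
qed

end

theorem corollary3p9:
  fixes H :: "'k::field_char_0 hopf_data"
  assumes "alg_closed TYPE('k)"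
    and "hopf_algebra H"
    and "semisimple H"
  shows "((\<exists>rho. is_module H 1 rho \<and> faithful_char H 1 rho) \<longleftrightarrow>
           (\<exists>\<sigma>. grouplike_dual H \<sigma> \<and> RH H = lin_span (range (dpow H \<sigma>)))) \<and>
         ((\<exists>\<sigma>. grouplike_dual H \<sigma> \<and> RH H = lin_span (range (dpow H \<sigma>))) \<longleftrightarrow>
           (\<exists>\<sigma>. grouplike_dual H \<sigma> \<and> lin_span (range (dpow H \<sigma>)) = vecs (hdim H)))"
proof -
  interpret hopf H by (rule hopf.intro) (rule assms(2))
  have i13: "\<exists>\<sigma>. grouplike_dual H \<sigma> \<and> lin_span (range (dpow H \<sigma>)) = vecs (hdim H)"
    if "\<exists>rho. is_module H 1 rho \<and> faithful_char H 1 rho"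
  proof -
    from that obtain rho where "is_module H 1 rho" "faithful_char H 1 rho" by blast
    then show ?thesis using faithful_to_span[OF assms(3)] by (auto simp: lin_span_eq)
  qed
  have i31: "\<exists>rho. is_module H 1 rho \<and> faithful_char H 1 rho"
    if "\<exists>\<sigma>. grouplike_dual H \<sigma> \<and> lin_span (range (dpow H \<sigma>)) = vecs (hdim H)"
  proof -
    from that obtain s where s: "grouplike_dual H s" "lin_span (range (dpow H s)) = vecs (hdim H)" by blast
    show ?thesis using rho1_module[OF s(1)] span_faithful[OF s(1)] s(2) by (auto simp: lin_span_eq)
  qed
  have i23: "\<exists>\<sigma>. grouplike_dual H \<sigma> \<and> lin_span (range (dpow H \<sigma>)) = vecs (hdim H)"
    if "\<exists>\<sigma>. grouplike_dual H \<sigma> \<and> RH H = lin_span (range (dpow H \<sigma>))"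
  proof -
    from that obtain s where s: "grouplike_dual H s" "RH H = lin_span (range (dpow H s))" by blast
    show ?thesis using RH_to_span[OF assms(3) s] s(1) by (auto simp: lin_span_eq)
  qed
  have i32: "\<exists>\<sigma>. grouplike_dual H \<sigma> \<and> RH H = lin_span (range (dpow H \<sigma>))"
    if "\<exists>\<sigma>. grouplike_dual H \<sigma> \<and> lin_span (range (dpow H \<sigma>)) = vecs (hdim H)"
  proof -
    from that obtain s where s: "grouplike_dual H s" "lin_span (range (dpow H s)) = vecs (hdim H)" by blast
    show ?thesis using span_RH[OF s(1)] s by (auto simp: lin_span_eq)
  qed
  show ?thesis using i13 i31 i23 i32 by blast
qed

end
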